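(* Let $\mu$ be a probability measure on $(0,1]$ whose support is $[0,1]$, and let $X,W\in L^1(\mathcal{D}_\mu)$. Then $u_\mu^c(X;W)=u_\mu(X)$ if and only if $X$ and $W$ are comonotone.
   Context: Let $(\Omega,\mathcal{F},\mathsf{P})$ be a probability space, $L^0$ the space of all real random variables, and $\mathcal{P}$ the set of probability measures on $\mathcal{F}$ absolutely continuous with respect to $\mathsf{P}$; measures are identified with their densities. For $\mathsf{Q}\in\mathcal{P}$, $\mathsf{E}_\mathsf{Q}X:=\mathsf{E}_\mathsf{Q}X^+-\mathsf{E}_\mathsf{Q}X^-$ with the convention $\infty-\infty=-\infty$. For $\lambda\in(0,1]$, let $\mathcal{D}_\lambda=\{\mathsf{Q}\in\mathcal{P}:d\mathsf{Q}/d\mathsf{P}\le\lambda^{-1}\}$ and $u_\lambda(X)=\inf_{\mathsf{Q}\in\mathcal{D}_\lambda}\mathsf{E}_\mathsf{Q}X$. For a probability measure $\mu$ on $(0,1]$, Weighted V@R utility is $u_\mu(X)=\int_{(0,1]}u_\lambda(X)\mu(d\lambda)$, $X\in L^0$, where $\int f\,d\mu:=\int f^+d\mu-\int f^-d\mu$ with $\infty-\infty=-\infty$; $u_\mu$ is a coherent utility, i.e. $u_\mu(X)=\inf_{\mathsf{Q}\in\mathcal{D}}\mathsf{E}_\mathsf{Q}X$ for some nonempty $\mathcal{D}\subseteq\mathcal{P}$, and $\mathcal{D}_\mu:=\{\mathsf{Q}\in\mathcal{P}:\mathsf{E}_\mathsf{Q}X\ge u_\mu(X)\ \forall X\in L^0\}$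 is its determining set. $L^1(\mathcal{D}_\mu):=\{X\in L^0:\lim_{n\to\infty}\sup_{\mathsf{Q}\in\mathcal{D}_\mu}\mathsf{E}_\mathsf{Q}|X|I(|X|>n)=0\}$. Extreme measures: $\mathcal{X}_{\mathcal{D}_\mu}(W)=\{\mathsf{Q}\in\mathcal{D}_\mu:\mathsf{E}_\mathsf{Q}W=u_\mu(W)\in(-\infty,\infty)\}$; utility contribution: $u_\mu^c(X;W)=\inf_{\mathsf{Q}\in\mathcal{X}_{\mathcal{D}_\mu}(W)}\mathsf{E}_\mathsf{Q}X$. Random variables $X,W$ are comonotone if $(X(\omega_2)-X(\omega_1))(W(\omega_2)-W(\omega_1))\ge0$ for $\mathsf{P}\times\mathsf{P}$-a.e. $(\omega_1,\omega_2)$. *)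

theory Defs
  imports "HOL-Probability.Probability"
begin

text \<open>Probability measures absolutely continuous w.r.t. P, identified with their densities.\<close>
definition is_density :: "'a measure \<Rightarrow> ('a \<Rightarrow> real) \<Rightarrow> bool" where
  "is_density M Z \<longleftrightarrow> Z \<in> borel_measurable M \<and> (\<forall>x\<in>space M. 0 \<le> Z x)
     \<and> (\<integral>\<^sup>+ x. ennreal (Z x) \<partial>M) = 1"

text \<open>Integral of an extended-real function: int f+ - int f-, with the convention inf - inf = -inf.\<close>
definition ext_int :: "'b measure \<Rightarrow> ('b \<Rightarrow> ereal) \<Rightarrow> ereal" where
  "ext_int N f = (let p = (\<integral>\<^sup>+ x. e2ennreal (max (f x) 0) \<partial>N);
                      n = (\<integral>\<^sup>+ x. e2ennreal (max (- f x) 0) \<partial>N)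
                  in if n = \<infinity> then -\<infinity> else enn2ereal p - enn2ereal n)"

definition expQ :: "'a measure \<Rightarrow> ('a \<Rightarrow> real) \<Rightarrow> ('a \<Rightarrow> real) \<Rightarrow> ereal" where
  "expQ M Z X = ext_int M (\<lambda>x. ereal (Z x * X x))"

definition D_lam :: "'a measure \<Rightarrow> real \<Rightarrow> ('a \<Rightarrow> real) set" where
  "D_lam M l = {Z. is_density M Z \<and> (AE x in M. Z x \<le> 1 / l)}"

definition u_lam :: "'a measure \<Rightarrow> real \<Rightarrow> ('a \<Rightarrow> real) \<Rightarrow> ereal" where
  "u_lam M l X = (INF Z\<in>D_lam M l. expQ M Z X)"

definition u_mu :: "'a measure \<Rightarrow> real measure \<Rightarrow> ('a \<Rightarrow> real) \<Rightarrow> ereal" where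
  "u_mu M mu X = ext_int mu (\<lambda>l. u_lam M l X)"

definition D_mu :: "'a measure \<Rightarrow> real measure \<Rightarrow> ('a \<Rightarrow> real) set" where
  "D_mu M mu = {Z. is_density M Z \<and> (\<forall>X\<in>borel_measurable M. u_mu M mu X \<le> expQ M Z X)}"

definition L1_D :: "'a measure \<Rightarrow> ('a \<Rightarrow> real) set \<Rightarrow> ('a \<Rightarrow> real) \<Rightarrow> bool" where
  "L1_D M D X \<longleftrightarrow> X \<in> borel_measurable M \<and>
     ((\<lambda>n::nat. SUP Z\<in>D. \<integral>\<^sup>+ x. ennreal (Z x * \<bar>X x\<bar> * indicator {y. \<bar>X y\<bar> > real n} x) \<partial>M)
        \<longlonglongrightarrow> 0)"

definition extreme_mu :: "'a measure \<Rightarrow> real measure \<Rightarrow> ('a \<Rightarrow> real) \<Rightarrow> ('a \<Rightarrow> real) set" where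
  "extreme_mu M mu W = {Z\<in>D_mu M mu. expQ M Z W = u_mu M mu W
      \<and> u_mu M mu W \<noteq> \<infinity> \<and> u_mu M mu W \<noteq> -\<infinity>}"

definition u_contrib :: "'a measure \<Rightarrow> real measure \<Rightarrow> ('a \<Rightarrow> real) \<Rightarrow> ('a \<Rightarrow> real) \<Rightarrow> ereal" where
  "u_contrib M mu X W = (INF Z\<in>extreme_mu M mu W. expQ M Z X)"

definition comonotone :: "'a measure \<Rightarrow> ('a \<Rightarrow> real) \<Rightarrow> ('a \<Rightarrow> real) \<Rightarrow> bool" where
  "comonotone M X W \<longleftrightarrow>
     (AE p in M \<Otimes>\<^sub>M M. 0 \<le> (X (snd p) - X (fst p)) * (W (snd p) - W (fst p)))"

definition measure_support :: "real measure \<Rightarrow> real set" where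
  "measure_support mu = {x. \<forall>e>0. 0 < emeasure mu (ball x e)}"

end

theory Submission
  imports Defs
begin

lemma e2_pos: "e2ennreal (max (ereal r) 0) = ennreal r"
  by (metis e2ennreal_ereal e2ennreal_neg ennreal_neg max.absorb1 max.absorb2 zero_ereal_def linorder_le_cases)

lemma e2_neg: "e2ennreal (max (- ereal r) 0) = ennreal (- r)"
  using e2_pos[of "-r"] by simp

lemma ext_int_real:
  "ext_int M (\<lambda>x. ereal (f x)) =
    (if (\<integral>\<^sup>+ x. ennreal (- f x) \<partial>M) = \<infinity> then -\<infinity>
     else enn2ereal (\<integral>\<^sup>+ x. ennreal (f x) \<partial>M) - enn2ereal (\<integral>\<^sup>+ x. ennreal (- f x) \<partial>M))"
  unfolding ext_int_def Let_def by (simp add: e2_pos e2_neg)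

lemma ext_int_integrable:
  assumes "integrable M f"
  shows "ext_int M (\<lambda>x. ereal (f x)) = ereal (integral\<^sup>L M f)"
proof -
  from integrableE[OF assms] obtain r q where rq: "0 \<le> r" "0 \<le> q"
    "(\<integral>\<^sup>+x. ennreal (f x)\<partial>M) = ennreal r"
    "(\<integral>\<^sup>+x. ennreal (-f x)\<partial>M) = ennreal q" "integral\<^sup>L M f = r - q" by metis
  show ?thesis unfolding ext_int_real rq using rq(1,2) by simp
qed

lemma ext_int_finite_integrable:
  assumes "f \<in> borel_measurable M" "ext_int M (\<lambda>x. ereal (f x)) \<noteq> \<infinity>"
    "ext_int M (\<lambda>x. ereal (f x)) \<noteq> -\<infinity>"
  shows "integrable M f"
proof -
  have n: "(\<integral>\<^sup>+ x. ennreal (- f x) \<partial>M) \<noteq> \<infinity>" using assms(3) unfolding ext_int_real by auto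
  then have "(\<integral>\<^sup>+ x. ennreal (f x) \<partial>M) \<noteq> \<infinity>" using assms(2) unfolding ext_int_real
    by auto
  then show ?thesis using n assms(1) unfolding real_integrable_def by auto
qed

lemma ext_int_const:
  assumes "prob_space N"
  shows "ext_int N (\<lambda>_. e) = e"
proof -
  have sp: "emeasure N (space N) = 1" using assms prob_space.emeasure_space_1 by blast
  show ?thesis
  proof (cases e)
    case (real r)
    then show ?thesis unfolding ext_int_def Let_def using e2_pos[of r] e2_neg[of r]
      by (cases "0 \<le> r") (auto simp: ennreal_neg sp zero_ennreal.rep_eq)
  next
    case PInf
    then show ?thesis unfolding ext_int_def Let_def by (simp add: sp)
  next
    case MInf
    then show ?thesis unfolding ext_int_def Let_def by (simp add: sp)
  qed
qed

lemma ext_int_mono_AE: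
  assumes "AE x in N. f x \<le> g x"
  shows "ext_int N f \<le> ext_int N g"
proof -
  define Pf where "Pf = (\<integral>\<^sup>+ x. e2ennreal (max (f x) 0) \<partial>N)"
  define Pg where "Pg = (\<integral>\<^sup>+ x. e2ennreal (max (g x) 0) \<partial>N)"
  define Nf where "Nf = (\<integral>\<^sup>+ x. e2ennreal (max (- f x) 0) \<partial>N)"
  define Ng where "Ng = (\<integral>\<^sup>+ x. e2ennreal (max (- g x) 0) \<partial>N)"
  have "Pf \<le> Pg" unfolding Pf_def Pg_def
    using assms by (intro nn_integral_mono_AE) (auto elim!: eventually_mono intro!: e2ennreal_mono max.mono)
  moreover have "Ng \<le> Nf" unfolding Nf_def Ng_def
    using assms by (intro nn_integral_mono_AE) (auto elim!: eventually_mono intro!: e2ennreal_mono max.mono)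
  ultimately show ?thesis
    unfolding ext_int_def Let_def Pf_def[symmetric] Pg_def[symmetric] Nf_def[symmetric] Ng_def[symmetric]
    by (cases "Nf = \<infinity>") (auto intro!: ereal_minus_mono simp: top_unique less_eq_ennreal.rep_eq[symmetric])
qed

lemma ext_int_cong_AE:
  assumes "AE x in N. f x = g x"
  shows "ext_int N f = ext_int N g"
  using ext_int_mono_AE[of f g N] ext_int_mono_AE[of g f N] assms
  by (metis (mono_tags, lifting) AE_mp antisym eventually_mono order_refl)


locale wvar = M: prob_space M + mu: prob_space mu
  for M :: "'a measure" and mu :: "real measure" +
  assumes sets_mu: "sets mu = sets borel" and mu01: "emeasure mu {0<..1} = 1"
begin

lemma sets_mu_borel[measurable_cong]: "sets mu = sets borel" by (rule sets_mu)

lemma AE_mu01: "AE l in mu. 0 < l \<and> l \<le> 1"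
proof -
  have "{0<..1::real} \<in> sets mu" using sets_mu by simp
  then have "mu.prob {0<..1} = 1" using mu01 by (simp add: mu.emeasure_eq_measure)
  then have "AE l in mu. l \<in> {0<..1}" by (rule mu.AE_prob_1)
  then show ?thesis by eventually_elim auto
qed

lemma density_int:
  assumes "is_density M Z"
  shows "integrable M Z" "integral\<^sup>L M Z = 1"
proof -
  have m: "Z \<in> borel_measurable M" and nn: "\<And>x. x \<in> space M \<Longrightarrow> 0 \<le> Z x"
    and i: "(\<integral>\<^sup>+ x. ennreal (Z x) \<partial>M) = 1" using assms unfolding is_density_def by auto
  show int: "integrable M Z" using m nn i by (intro integrableI_nonneg) auto
  have "ennreal (integral\<^sup>L M Z) = 1"
    using nn_integral_eq_integral[OF int] nn i by (simp add: AE_I2)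
  then show "integral\<^sup>L M Z = 1" by (metis ennreal_1 ennreal_inj integral_nonneg_AE nn AE_I2 zero_le_one)
qed

lemma density_measurable: "is_density M Z \<Longrightarrow> Z \<in> borel_measurable M"
  unfolding is_density_def by auto

lemma Dlam_mult_integrable:
  fixes Y :: "'a \<Rightarrow> real"
  assumes "Z \<in> D_lam M l" "0 < l" "integrable M Y"
  shows "integrable M (\<lambda>x. Z x * Y x)"
proof -
  have Z: "Z \<in> borel_measurable M" "\<And>x. x \<in> space M \<Longrightarrow> 0 \<le> Z x" "AE x in M. Z x \<le> 1 / l"
    using assms unfolding D_lam_def is_density_def by auto
  show ?thesis
  proof (rule Bochner_Integration.integrable_bound[where f="\<lambda>x. (1/l) * Y x"])
    show "integrable M (\<lambda>x. 1 / l * Y x)" using assms(3) by simp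
    show "(\<lambda>x. Z x * Y x) \<in> borel_measurable M" using Z(1) borel_measurable_integrable[OF assms(3)] by (intro borel_measurable_times)
    show "AE x in M. norm (Z x * Y x) \<le> norm (1 / l * Y x)"
      using Z(3) AE_space proof eventually_elim
      case (elim x)
      then have "Z x * \<bar>Y x\<bar> \<le> (1/l) * \<bar>Y x\<bar>" by (intro mult_right_mono) auto
      then show ?case using Z(2)[OF elim(2)] \<open>0 < l\<close> by (auto simp: abs_mult)
    qed
  qed
qed

lemma expQ_Dlam:
  fixes Y :: "'a \<Rightarrow> real"
  assumes "Z \<in> D_lam M l" "0 < l" "integrable M Y"
  shows "expQ M Z Y = ereal (\<integral>x. Z x * Y x \<partial>M)"
  unfolding expQ_def using ext_int_integrable[OF Dlam_mult_integrable[OF assms]] .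

lemma one_density: "is_density M (\<lambda>_. 1)"
  unfolding is_density_def by (simp add: M.emeasure_space_1)

lemma one_Dlam: "0 < l \<Longrightarrow> l \<le> 1 \<Longrightarrow> (\<lambda>_. 1) \<in> D_lam M l"
  unfolding D_lam_def using one_density by auto

lemma ulam_le_E:
  fixes Y :: "'a \<Rightarrow> real"
  assumes "0 < l" "l \<le> 1" "integrable M Y"
  shows "u_lam M l Y \<le> ereal (\<integral>x. Y x \<partial>M)"
proof -
  have "u_lam M l Y \<le> expQ M (\<lambda>_. 1) Y" unfolding u_lam_def by (rule INF_lower) (rule one_Dlam[OF assms(1,2)])
  also have "\<dots> = ereal (\<integral>x. Y x \<partial>M)" using expQ_Dlam[OF one_Dlam[OF assms(1,2)] assms(1,3)] by simp
  finally show ?thesis .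
qed

lemma Dlam_int_ge:
  fixes Y :: "'a \<Rightarrow> real"
  assumes "Z \<in> D_lam M l" "0 < l" "integrable M Y"
  shows "- (\<integral>x. \<bar>Y x\<bar> \<partial>M) / l \<le> (\<integral>x. Z x * Y x \<partial>M)"
proof -
  have Z: "\<And>x. x \<in> space M \<Longrightarrow> 0 \<le> Z x" "AE x in M. Z x \<le> 1 / l"
    using assms unfolding D_lam_def is_density_def by auto
  have "(\<integral>x. - (1/l) * \<bar>Y x\<bar> \<partial>M) \<le> (\<integral>x. Z x * Y x \<partial>M)"
  proof (rule integral_mono_AE)
    show "integrable M (\<lambda>x. - (1 / l) * \<bar>Y x\<bar>)" using assms(3) by auto
    show "integrable M (\<lambda>x. Z x * Y x)" by (rule Dlam_mult_integrable[OF assms])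
    show "AE x in M. - (1 / l) * \<bar>Y x\<bar> \<le> Z x * Y x"
      using Z(2) AE_space proof eventually_elim
      case (elim x)
      then have "Z x * \<bar>Y x\<bar> \<le> (1/l) * \<bar>Y x\<bar>" by (intro mult_right_mono) auto
      moreover have "- (Z x * \<bar>Y x\<bar>) \<le> Z x * Y x" 
        using mult_left_mono[of "- \<bar>Y x\<bar>" "Y x" "Z x"] Z(1)[OF elim(2)] by simp
      ultimately show ?case by linarith
    qed
  qed
  then show ?thesis by simp
qed

lemma ulam_ge:
  fixes Y :: "'a \<Rightarrow> real"
  assumes "0 < l" "integrable M Y"
  shows "ereal (- (\<integral>x. \<bar>Y x\<bar> \<partial>M) / l) \<le> u_lam M l Y"
  unfolding u_lam_def
proof (rule INF_greatest)
  fix Z assume Z: "Z \<in> D_lam M l"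
  show "ereal (- (\<integral>x. \<bar>Y x\<bar> \<partial>M) / l) \<le> expQ M Z Y"
    using expQ_Dlam[OF Z assms] Dlam_int_ge[OF Z assms] by simp
qed

lemma ulam_real:
  fixes Y :: "'a \<Rightarrow> real"
  assumes "0 < l" "l \<le> 1" "integrable M Y"
  shows "u_lam M l Y = ereal (real_of_ereal (u_lam M l Y))"
  using ulam_ge[OF assms(1,3)] ulam_le_E[OF assms]
  by (cases "u_lam M l Y") auto

lemma superadd:
  assumes "0 < l" "integrable M X" "integrable M W"
  shows "u_lam M l X + u_lam M l W \<le> u_lam M l (\<lambda>x. X x + W x)"
  unfolding u_lam_def[of M l "\<lambda>x. X x + W x"]
proof (rule INF_greatest)
  fix Z assume Z: "Z \<in> D_lam M l"
  have "expQ M Z (\<lambda>x. X x + W x) = ereal (\<integral>x. Z x * (X x + W x) \<partial>M)"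
    using expQ_Dlam[OF Z assms(1)] assms(2,3) by auto
  also have "\<dots> = ereal (\<integral>x. Z x * X x \<partial>M) + ereal (\<integral>x. Z x * W x \<partial>M)"
    using Dlam_mult_integrable[OF Z assms(1,2)] Dlam_mult_integrable[OF Z assms(1,3)]
    by (simp add: distrib_left)
  also have "\<dots> = expQ M Z X + expQ M Z W"
    using expQ_Dlam[OF Z assms(1,2)] expQ_Dlam[OF Z assms(1,3)] by simp
  finally have e: "expQ M Z (\<lambda>x. X x + W x) = expQ M Z X + expQ M Z W" .
  show "u_lam M l X + u_lam M l W \<le> expQ M Z (\<lambda>x. X x + W x)"
    unfolding e u_lam_def by (intro add_mono INF_lower Z)
qed

lemma one_Dmu: "(\<lambda>_. 1) \<in> D_mu M mu"
  unfolding D_mu_def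
proof (safe intro!: one_density)
  fix Y :: "'a \<Rightarrow> real" assume Y: "Y \<in> borel_measurable M"
  have "AE l in mu. u_lam M l Y \<le> expQ M (\<lambda>_. 1) Y"
    using AE_mu01 by eventually_elim (auto simp: u_lam_def intro!: INF_lower one_Dlam)
  then have "u_mu M mu Y \<le> ext_int mu (\<lambda>_. expQ M (\<lambda>_. 1) Y)"
    unfolding u_mu_def by (rule ext_int_mono_AE)
  also have "\<dots> = expQ M (\<lambda>_. 1) Y" by (rule ext_int_const) (rule mu.prob_space_axioms)
  finally show "u_mu M mu Y \<le> expQ M (\<lambda>_. 1) Y" .
qed

end

definition cdfS :: "'a measure \<Rightarrow> ('a \<Rightarrow> real) \<Rightarrow> real \<Rightarrow> real" where
  "cdfS M S t = measure M {x\<in>space M. S x \<le> t}"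
definition cdfSm :: "'a measure \<Rightarrow> ('a \<Rightarrow> real) \<Rightarrow> real \<Rightarrow> real" where
  "cdfSm M S t = measure M {x\<in>space M. S x < t}"
definition qnt :: "'a measure \<Rightarrow> ('a \<Rightarrow> real) \<Rightarrow> real \<Rightarrow> real" where
  "qnt M S l = Inf {t. l \<le> cdfS M S t}"

context wvar
begin

lemma cdfS_mono: "S \<in> borel_measurable M \<Longrightarrow> mono (cdfS M S)"
  unfolding cdfS_def mono_def by (auto intro!: M.finite_measure_mono)

lemma cdfSm_mono: "S \<in> borel_measurable M \<Longrightarrow> mono (cdfSm M S)"
  unfolding cdfSm_def mono_def by (auto intro!: M.finite_measure_mono)

lemma cdfSm_le: "S \<in> borel_measurable M \<Longrightarrow> cdfSm M S t \<le> cdfS M S t"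
  unfolding cdfS_def cdfSm_def by (auto intro!: M.finite_measure_mono)

lemma cdf_eq: "S \<in> borel_measurable M \<Longrightarrow> measure M {x\<in>space M. S x = t} = cdfS M S t - cdfSm M S t"
proof -
  assume [measurable]: "S \<in> borel_measurable M"
  have "{x\<in>space M. S x \<le> t} = {x\<in>space M. S x < t} \<union> {x\<in>space M. S x = t}" by auto
  moreover have "measure M ({x\<in>space M. S x < t} \<union> {x\<in>space M. S x = t})
     = measure M {x\<in>space M. S x < t} + measure M {x\<in>space M. S x = t}"
    by (intro M.finite_measure_Union) auto
  ultimately show ?thesis unfolding cdfS_def cdfSm_def by simp
qed

lemma cdfS_top:
  assumes [measurable]: "S \<in> borel_measurable M" and "l < 1"
  shows "\<exists>t. l \<le> cdfS M S t"
proof -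
  let ?A = "\<lambda>n::nat. {x\<in>space M. S x \<le> real n}"
  have "(\<lambda>n. measure M (?A n)) \<longlonglongrightarrow> measure M (\<Union>n. ?A n)"
    by (rule M.finite_Lim_measure_incseq) (auto simp: incseq_def)
  moreover have "(\<Union>n. ?A n) = space M"
    using reals_Archimedean2 by (auto intro: less_imp_le)
  ultimately have "(\<lambda>n. measure M (?A n)) \<longlonglongrightarrow> 1" by (simp add: M.prob_space)
  then have "eventually (\<lambda>n. l < measure M (?A n)) sequentially"
    using assms(2) by (rule order_tendstoD)
  then obtain n where "l < measure M (?A n)" by (auto simp: eventually_sequentially)
  then show ?thesis unfolding cdfS_def by (auto intro!: exI[of _ "real n"])
qed

lemma cdfS_bot:
  assumes [measurable]: "S \<in> borel_measurable M" and "0 < l"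
  shows "\<exists>b. \<forall>t. l \<le> cdfS M S t \<longrightarrow> b \<le> t"
proof -
  let ?A = "\<lambda>n::nat. {x\<in>space M. S x \<le> - real n}"
  have "(\<lambda>n. measure M (?A n)) \<longlonglongrightarrow> measure M (\<Inter>n. ?A n)"
    by (rule M.finite_Lim_measure_decseq) (auto simp: decseq_def)
  moreover have "(\<Inter>n. ?A n) = {}"
  proof safe
    fix x assume "x \<in> (\<Inter>n. ?A n)"
    moreover obtain n where "- S x < real n" using reals_Archimedean2 by blast
    ultimately have "S x \<le> - real n" by blast
    with \<open>- S x < real n\<close> show "x \<in> {}" by linarith
  qed
  ultimately have "(\<lambda>n. measure M (?A n)) \<longlonglongrightarrow> 0" by simp
  then have "eventually (\<lambda>n. measure M (?A n) < l) sequentially"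
    using assms(2) by (rule order_tendstoD)
  then obtain n where n: "measure M (?A n) < l" by (auto simp: eventually_sequentially)
  show ?thesis
  proof (intro exI[of _ "- real n"] allI impI)
    fix t assume "l \<le> cdfS M S t"
    show "- real n \<le> t"
    proof (rule ccontr)
      assume "\<not> - real n \<le> t"
      then have "cdfS M S t \<le> cdfS M S (- real n)" using cdfS_mono[OF assms(1)] by (auto simp: mono_def)
      then show False using n \<open>l \<le> cdfS M S t\<close> unfolding cdfS_def by simp
    qed
  qed
qed

lemma qnt_props:
  assumes [measurable]: "S \<in> borel_measurable M" and l: "0 < l" "l < 1"
  shows "l \<le> cdfS M S (qnt M S l)" "cdfSm M S (qnt M S l) \<le> l"
    "\<And>t. qnt M S l \<le> t \<longleftrightarrow> l \<le> cdfS M S t"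
proof -
  let ?T = "{t. l \<le> cdfS M S t}"
  have ne: "?T \<noteq> {}" using cdfS_top[OF assms(1) l(2)] by auto
  obtain b where b: "\<And>t. t \<in> ?T \<Longrightarrow> b \<le> t" using cdfS_bot[OF assms(1) l(1)] by auto
  then have bdd: "bdd_below ?T" by (auto simp: bdd_below_def)
  define q where "q = qnt M S l"
  have q: "q = Inf ?T" unfolding q_def qnt_def ..
  have mono: "mono (cdfS M S)" by (rule cdfS_mono) simp
  have lower: "q \<le> t" if "t \<in> ?T" for t unfolding q using that bdd by (rule cInf_lower)
  have up: "l \<le> cdfS M S (q + inverse (real (Suc n)))" for n
  proof -
    have "Inf ?T < q + inverse (real (Suc n))" unfolding q by simp
    then obtain t where "t \<in> ?T" "t < q + inverse (real (Suc n))" using cInf_lessD[OF ne] by blast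
    then show ?thesis using mono by (auto simp: mono_def intro: order_trans)
  qed
  show 1: "l \<le> cdfS M S (qnt M S l)"
  proof -
    let ?A = "\<lambda>n::nat. {x\<in>space M. S x \<le> q + inverse (real (Suc n))}"
    have "(\<lambda>n. measure M (?A n)) \<longlonglongrightarrow> measure M (\<Inter>n. ?A n)"
    proof (rule M.finite_Lim_measure_decseq)
      show "decseq ?A" unfolding decseq_def
      proof (intro allI impI subsetI)
        fix m n x assume "m \<le> n" "x \<in> ?A n"
        then have x: "x \<in> space M" "S x \<le> q + inverse (real (Suc n))" by auto
        have "inverse (real (Suc n)) \<le> inverse (real (Suc m))" using \<open>m \<le> n\<close> by (simp add: field_simps)
        then have "S x \<le> q + inverse (real (Suc m))" using x(2) by linarith
        then show "x \<in> ?A m" using x(1) by simp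
      qed
    qed auto
    moreover have "(\<Inter>n. ?A n) = {x\<in>space M. S x \<le> q}"
    proof safe
      fix x assume x: "x \<in> (\<Inter>n. ?A n)"
      show "S x \<le> q"
      proof (rule ccontr)
        assume "\<not> S x \<le> q"
        then obtain n where n: "inverse (real (Suc n)) < S x - q" using reals_Archimedean[of "S x - q"] by auto
        from x have "S x \<le> q + inverse (real (Suc n))" by blast
        with n show False by linarith
      qed
    next
      fix x n assume "S x \<le> q"
      moreover have "0 < inverse (real (Suc n))" by simp
      ultimately show "S x \<le> q + inverse (real (Suc n))" by linarith
    next
      fix x assume "x \<in> (\<Inter>n. ?A n)" then show "x \<in> space M" by blast
    qed
    ultimately have "(\<lambda>n. cdfS M S (q + inverse (real (Suc n)))) \<longlonglongrightarrow> cdfS M S q"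
      unfolding cdfS_def by simp
    then show ?thesis unfolding q_def[symmetric] using up by (intro LIMSEQ_le_const) auto
  qed
  show "cdfSm M S (qnt M S l) \<le> l"
  proof -
    let ?A = "\<lambda>n::nat. {x\<in>space M. S x \<le> q - inverse (real (Suc n))}"
    have "(\<lambda>n. measure M (?A n)) \<longlonglongrightarrow> measure M (\<Union>n. ?A n)"
    proof (rule M.finite_Lim_measure_incseq)
      show "incseq ?A" unfolding incseq_def
      proof (intro allI impI subsetI)
        fix m n x assume "m \<le> n" "x \<in> ?A m"
        then have x: "x \<in> space M" "S x \<le> q - inverse (real (Suc m))" by auto
        have "inverse (real (Suc n)) \<le> inverse (real (Suc m))" using \<open>m \<le> n\<close> by (simp add: field_simps)
        then have "S x \<le> q - inverse (real (Suc n))" using x(2) by linarith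
        then show "x \<in> ?A n" using x(1) by simp
      qed
    qed auto
    moreover have "(\<Union>n. ?A n) = {x\<in>space M. S x < q}"
    proof safe
      fix x assume x: "x \<in> space M" "S x < q"
      then obtain n where n: "inverse (real (Suc n)) < q - S x" using reals_Archimedean[of "q - S x"] by auto
      then have "S x \<le> q - inverse (real (Suc n))" by linarith
      with x show "x \<in> (\<Union>n. ?A n)" by blast
    next
      fix x n assume "S x \<le> q - inverse (real (Suc n))"
      moreover have "0 < inverse (real (Suc n))" by simp
      ultimately show "S x < q" by linarith
    qed
    ultimately have "(\<lambda>n. cdfS M S (q - inverse (real (Suc n)))) \<longlonglongrightarrow> cdfSm M S q"
      unfolding cdfS_def cdfSm_def by simp
    moreover have "cdfS M S (q - inverse (real (Suc n))) \<le> l" for n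
    proof (rule ccontr)
      assume "\<not> cdfS M S (q - inverse (real (Suc n))) \<le> l"
      then have "q \<le> q - inverse (real (Suc n))" by (intro lower) simp
      then show False by simp
    qed
    ultimately show ?thesis unfolding q_def[symmetric] by (intro LIMSEQ_le_const2) auto
  qed
  fix t
  show "qnt M S l \<le> t \<longleftrightarrow> l \<le> cdfS M S t"
  proof
    assume "qnt M S l \<le> t"
    then show "l \<le> cdfS M S t" using 1 mono by (auto simp: mono_def intro: order_trans)
  next
    assume "l \<le> cdfS M S t"
    then show "qnt M S l \<le> t" unfolding q_def[symmetric] by (intro lower) simp
  qed
qed

end

definition aa :: "'a measure \<Rightarrow> ('a \<Rightarrow> real) \<Rightarrow> real \<Rightarrow> real" where
  "aa M S l = (if cdfS M S (qnt M S l) - cdfSm M S (qnt M S l) = 0 then 0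
     else (l - cdfSm M S (qnt M S l)) / (cdfS M S (qnt M S l) - cdfSm M S (qnt M S l)))"

definition npz :: "'a measure \<Rightarrow> ('a \<Rightarrow> real) \<Rightarrow> real \<Rightarrow> 'a \<Rightarrow> real" where
  "npz M S l x = (if 0 < l \<and> l < 1 then
     (if S x < qnt M S l then 1 / l else if S x = qnt M S l then aa M S l / l else 0) else 1)"

context wvar
begin

lemma aa_bounds:
  assumes S: "S \<in> borel_measurable M" and l: "0 < l" "l < 1"
  shows "0 \<le> aa M S l" "aa M S l \<le> 1"
proof -
  note qp = qnt_props[OF S l]
  have le: "cdfSm M S (qnt M S l) \<le> cdfS M S (qnt M S l)" by (rule cdfSm_le[OF S])
  show "0 \<le> aa M S l" unfolding aa_def using qp(2) le by (auto intro!: divide_nonneg_nonneg)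
  show "aa M S l \<le> 1" unfolding aa_def using qp(1) le by (auto simp: divide_le_eq_1)
qed

lemma npz_bounds:
  assumes S: "S \<in> borel_measurable M" and l: "0 < l" "l \<le> 1"
  shows "0 \<le> npz M S l x" "npz M S l x \<le> 1 / l"
proof -
  show "0 \<le> npz M S l x"
    using aa_bounds[OF S] l unfolding npz_def by auto
  show "npz M S l x \<le> 1 / l"
  proof (cases "l < 1")
    case True
    then show ?thesis using aa_bounds[OF S l(1) True] l unfolding npz_def
      by (auto simp: divide_right_mono)
  next
    case False
    then show ?thesis using l unfolding npz_def by auto
  qed
qed

lemma npz_meas[measurable]:
  assumes [measurable]: "S \<in> borel_measurable M"
  shows "npz M S l \<in> borel_measurable M"
  unfolding npz_def by measurable

lemma npz_int:
  assumes S[measurable]: "S \<in> borel_measurable M" and l: "0 < l" "l \<le> 1"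
  shows "integrable M (npz M S l)" "integral\<^sup>L M (npz M S l) = 1"
proof -
  show int: "integrable M (npz M S l)"
    using npz_bounds[OF S l] by (intro M.integrable_const_bound[where B="1/l"]) auto
  show "integral\<^sup>L M (npz M S l) = 1"
  proof (cases "l < 1")
    case False
    then show ?thesis using l unfolding npz_def by (simp add: M.prob_space)
  next
    case True
    define q where "q = qnt M S l"
    define A where "A = {x\<in>space M. S x < q}"
    define B where "B = {x\<in>space M. S x = q}"
    have [measurable]: "A \<in> sets M" "B \<in> sets M" unfolding A_def B_def by measurable
    have "integral\<^sup>L M (npz M S l) = (\<integral>x. (1/l) * indicator A x + (aa M S l / l) * indicator B x \<partial>M)"
      by (rule Bochner_Integration.integral_cong) (auto simp: npz_def A_def B_def q_def l True indicator_def)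
    also have "\<dots> = (1/l) * measure M A + (aa M S l / l) * measure M B"
    proof -
      have iA: "integrable M (indicator A :: 'a \<Rightarrow> real)" by (rule integrable_real_indicator) (auto simp: M.emeasure_le_1 less_top[symmetric])
      have iB: "integrable M (indicator B :: 'a \<Rightarrow> real)" by (rule integrable_real_indicator) (auto simp: M.emeasure_le_1 less_top[symmetric])
      have "(\<integral>x. (1/l) * indicator A x + (aa M S l / l) * indicator B x \<partial>M)
          = (\<integral>x. (1/l) * indicator A x \<partial>M) + (\<integral>x. (aa M S l / l) * indicator B x \<partial>M)"
        using iA iB by (intro Bochner_Integration.integral_add integrable_mult_right)
      also have "\<dots> = (1/l) * measure M A + (aa M S l / l) * measure M B"
        using sets.sets_into_space[OF \<open>A \<in> sets M\<close>] sets.sets_into_space[OF \<open>B \<in> sets M\<close>]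
        by (simp add: Int_absorb2)
      finally show ?thesis .
    qed
    also have "measure M A = cdfSm M S q" unfolding A_def cdfSm_def ..
    also have "measure M B = cdfS M S q - cdfSm M S q" unfolding B_def by (rule cdf_eq[OF S])
    finally have I: "integral\<^sup>L M (npz M S l) = (1/l) * cdfSm M S q + (aa M S l / l) * (cdfS M S q - cdfSm M S q)" .
    note qp = qnt_props[OF S l(1) True]
    show ?thesis
    proof (cases "cdfS M S q - cdfSm M S q = 0")
      case True
      then have "cdfSm M S q = l" using qp(1,2) unfolding q_def by linarith
      then show ?thesis unfolding I using l True by simp
    next
      case False
      then have "aa M S l * (cdfS M S q - cdfSm M S q) = l - cdfSm M S q"
        unfolding aa_def q_def[symmetric] by simp
      then show ?thesis unfolding I using l by (simp add: field_simps)
    qed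
  qed
qed

lemma npz_Dlam:
  assumes S[measurable]: "S \<in> borel_measurable M" and l: "0 < l" "l \<le> 1"
  shows "npz M S l \<in> D_lam M l"
proof -
  have "(\<integral>\<^sup>+ x. ennreal (npz M S l x) \<partial>M) = ennreal (integral\<^sup>L M (npz M S l))"
  proof (rule nn_integral_eq_integral)
    show "integrable M (npz M S l)" by (rule npz_int(1)[OF S l])
    show "AE x in M. 0 \<le> npz M S l x" using npz_bounds(1)[OF S l] by simp
  qed
  then have i: "(\<integral>\<^sup>+ x. ennreal (npz M S l x) \<partial>M) = 1" using npz_int(2)[OF S l] by simp
  have "is_density M (npz M S l)" unfolding is_density_def using i npz_bounds(1)[OF S l] npz_meas[OF S] by blast
  moreover have "AE x in M. npz M S l x \<le> 1 / l" using npz_bounds(2)[OF S l] by simp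
  ultimately show ?thesis unfolding D_lam_def by blast
qed

lemma density_props:
  assumes "Q \<in> D_lam M l"
  shows "Q \<in> borel_measurable M" "\<And>x. x \<in> space M \<Longrightarrow> 0 \<le> Q x" "AE x in M. Q x \<le> 1 / l"
    "integrable M Q" "integral\<^sup>L M Q = 1"
proof -
  have d: "is_density M Q" and ae: "AE x in M. Q x \<le> 1 / l" using assms unfolding D_lam_def by auto
  show "Q \<in> borel_measurable M" using d unfolding is_density_def by blast
  show "\<And>x. x \<in> space M \<Longrightarrow> 0 \<le> Q x" using d unfolding is_density_def by blast
  show "AE x in M. Q x \<le> 1 / l" by (rule ae)
  show "integrable M Q" by (rule density_int(1)[OF d])
  show "integral\<^sup>L M Q = 1" by (rule density_int(2)[OF d])
qed

lemma np_min:
  assumes S[measurable]: "S \<in> borel_measurable M" and l: "0 < l" "l < 1"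
    and Y: "integrable M Y"
    and k1: "AE x in M. S x \<le> qnt M S l \<longrightarrow> Y x \<le> k"
    and k2: "AE x in M. qnt M S l \<le> S x \<longrightarrow> k \<le> Y x"
  shows "u_lam M l Y = ereal (\<integral>x. npz M S l x * Y x \<partial>M)"
proof (rule antisym)
  have l1: "l \<le> 1" using l by simp
  have Z: "npz M S l \<in> D_lam M l" by (rule npz_Dlam[OF S l(1) l1])
  show "u_lam M l Y \<le> ereal (\<integral>x. npz M S l x * Y x \<partial>M)"
  proof -
    have "u_lam M l Y \<le> expQ M (npz M S l) Y" unfolding u_lam_def by (rule INF_lower[OF Z])
    then show ?thesis using expQ_Dlam[OF Z l(1) Y] by simp
  qed
  show "ereal (\<integral>x. npz M S l x * Y x \<partial>M) \<le> u_lam M l Y"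
    unfolding u_lam_def
  proof (rule INF_greatest)
    fix Q assume Q: "Q \<in> D_lam M l"
    note Qp = density_props[OF Q]
    note Zp = density_props[OF Z]
    let ?Z = "npz M S l"
    have iQY: "integrable M (\<lambda>x. Q x * Y x)" by (rule Dlam_mult_integrable[OF Q l(1) Y])
    have iZY: "integrable M (\<lambda>x. ?Z x * Y x)" by (rule Dlam_mult_integrable[OF Z l(1) Y])
    have "AE x in M. 0 \<le> (Q x - ?Z x) * (Y x - k)"
      using k1 k2 Qp(3) AE_space
    proof eventually_elim
      case (elim x)
      show ?case
      proof (cases "S x < qnt M S l")
        case True
        then have "?Z x = 1/l" unfolding npz_def using l by auto
        then show ?thesis using elim True by (intro mult_nonpos_nonpos) auto
      next
        case False
        show ?thesis
        proof (cases "S x = qnt M S l")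
          case True
          then have "Y x = k" using elim by fastforce
          then show ?thesis by simp
        next
          case False2: False
          then have "?Z x = 0" "qnt M S l \<le> S x" unfolding npz_def using l False by auto
          then show ?thesis using elim Qp(2) by (intro mult_nonneg_nonneg) auto
        qed
      qed
    qed
    then have "0 \<le> (\<integral>x. (Q x - ?Z x) * (Y x - k) \<partial>M)" by (rule integral_nonneg_AE)
    also have "(\<integral>x. (Q x - ?Z x) * (Y x - k) \<partial>M) = (\<integral>x. (Q x * Y x - ?Z x * Y x) - k * (Q x - ?Z x) \<partial>M)"
      by (rule Bochner_Integration.integral_cong) (auto simp: algebra_simps)
    also have "\<dots> = (\<integral>x. Q x * Y x \<partial>M) - (\<integral>x. ?Z x * Y x \<partial>M) - k * ((\<integral>x. Q x \<partial>M) - (\<integral>x. ?Z x \<partial>M))"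
      using iQY iZY Qp(4) Zp(4) by simp
    finally have "(\<integral>x. ?Z x * Y x \<partial>M) \<le> (\<integral>x. Q x * Y x \<partial>M)" using Qp(5) Zp(5) by simp
    then show "ereal (\<integral>x. ?Z x * Y x \<partial>M) \<le> expQ M Q Y" using expQ_Dlam[OF Q l(1) Y] by simp
  qed
qed

end

context wvar
begin

lemma bdd_mult_integrable:
  fixes Y :: "'a \<Rightarrow> real"
  assumes Q: "Q \<in> borel_measurable M" "\<And>x. x \<in> space M \<Longrightarrow> \<bar>Q x\<bar> \<le> B" and Y: "integrable M Y"
  shows "integrable M (\<lambda>x. Q x * Y x)"
proof (rule Bochner_Integration.integrable_bound[where f="\<lambda>x. B * Y x"])
  show "integrable M (\<lambda>x. B * Y x)" using Y by simp
  show "(\<lambda>x. Q x * Y x) \<in> borel_measurable M"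
    using Q(1) borel_measurable_integrable[OF Y] by (intro borel_measurable_times)
  show "AE x in M. norm (Q x * Y x) \<le> norm (B * Y x)"
  proof (rule AE_I2)
    fix x assume x: "x \<in> space M"
    have B: "0 \<le> B" using Q(2)[OF x] by linarith
    have "\<bar>Q x\<bar> * \<bar>Y x\<bar> \<le> B * \<bar>Y x\<bar>" using Q(2)[OF x] by (intro mult_right_mono) auto
    then show "norm (Q x * Y x) \<le> norm (B * Y x)" using B by (simp add: abs_mult)
  qed
qed

lemma pos_int:
  fixes f :: "'a \<Rightarrow> real"
  assumes f: "integrable M f" "\<And>x. x \<in> space M \<Longrightarrow> 0 \<le> f x"
    and p: "0 < measure M {x\<in>space M. 0 < f x}"
  shows "0 < integral\<^sup>L M f"
proof -
  have fm[measurable]: "f \<in> borel_measurable M" using f(1) by auto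
  have ge: "0 \<le> integral\<^sup>L M f" using f(2) by (auto intro!: integral_nonneg_AE AE_I2)
  have "integral\<^sup>L M f \<noteq> 0"
  proof
    assume "integral\<^sup>L M f = 0"
    then have "AE x in M. f x = 0" using integral_nonneg_eq_0_iff_AE[OF f(1)] f(2) by (simp add: AE_I2)
    then have "AE x in M. x \<notin> {x\<in>space M. 0 < f x}" by eventually_elim auto
    then have "emeasure M {x\<in>space M. 0 < f x} = 0"
      by (subst (asm) AE_iff_null_sets[symmetric]) (auto simp: null_sets_def)
    then show False using p by (simp add: M.emeasure_eq_measure)
  qed
  then show ?thesis using ge by simp
qed

lemma exchange:
  fixes Y :: "'a \<Rightarrow> real"
  assumes l: "0 < l" and Z: "Z \<in> D_lam M l" and Zb: "\<And>x. x \<in> space M \<Longrightarrow> Z x \<le> 1 / l"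
    and Y: "integrable M Y" and opt: "u_lam M l Y = ereal (\<integral>x. Z x * Y x \<partial>M)"
  shows "measure M {x\<in>space M. Z x < 1/l \<and> Y x < c} = 0 \<or> measure M {x\<in>space M. 0 < Z x \<and> c < Y x} = 0"
proof (rule ccontr)
  assume neg: "\<not> ?thesis"
  define C where "C = {x\<in>space M. Z x < 1/l \<and> Y x < c}"
  define D where "D = {x\<in>space M. 0 < Z x \<and> c < Y x}"
  note Zp = density_props[OF Z]
  have Zm[measurable]: "Z \<in> borel_measurable M" by (rule Zp(1))
  have Ym[measurable]: "Y \<in> borel_measurable M" using Y by auto
  have CD[measurable]: "C \<in> sets M" "D \<in> sets M" unfolding C_def D_def by measurable
  have pC: "0 < measure M C" and pD: "0 < measure M D"
    using neg unfolding C_def[symmetric] D_def[symmetric] by (auto simp: less_le)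
  define dC where "dC x = (1/l - Z x) * indicator C x" for x
  define dD where "dD x = Z x * indicator D x" for x
  have dCm[measurable]: "dC \<in> borel_measurable M" unfolding dC_def by measurable
  have dDm[measurable]: "dD \<in> borel_measurable M" unfolding dD_def by measurable
  have dCb: "\<bar>dC x\<bar> \<le> 1/l" if "x \<in> space M" for x
    using Zp(2)[OF that] Zb[OF that] l unfolding dC_def by (auto simp: indicator_def)
  have dDb: "\<bar>dD x\<bar> \<le> 1/l" if "x \<in> space M" for x
    using Zp(2)[OF that] Zb[OF that] l unfolding dD_def by (auto simp: indicator_def)
  have dCnn: "0 \<le> dC x" if "x \<in> space M" for x
    using Zb[OF that] unfolding dC_def by (auto simp: indicator_def)
  have dDnn: "0 \<le> dD x" if "x \<in> space M" for x
    using Zp(2)[OF that] unfolding dD_def by (auto simp: indicator_def)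
  have iC: "integrable M dC" using dCb by (intro M.integrable_const_bound[where B="1/l"]) auto
  have iD: "integrable M dD" using dDb by (intro M.integrable_const_bound[where B="1/l"]) auto
  have iCY: "integrable M (\<lambda>x. dC x * Y x)" by (rule bdd_mult_integrable[OF dCm dCb Y])
  have iDY: "integrable M (\<lambda>x. dD x * Y x)" by (rule bdd_mult_integrable[OF dDm dDb Y])
  have iZY: "integrable M (\<lambda>x. Z x * Y x)" by (rule Dlam_mult_integrable[OF Z l Y])
  define m1 where "m1 = integral\<^sup>L M dC"
  define m2 where "m2 = integral\<^sup>L M dD"
  have m1: "0 < m1" unfolding m1_def
  proof (rule pos_int[OF iC dCnn])
    have "{x\<in>space M. 0 < dC x} = C" unfolding dC_def C_def by (auto simp: indicator_def)
    then show "0 < measure M {x\<in>space M. 0 < dC x}" using pC by simp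
  qed
  have m2: "0 < m2" unfolding m2_def
  proof (rule pos_int[OF iD dDnn])
    have "{x\<in>space M. 0 < dD x} = D" unfolding dD_def D_def by (auto simp: indicator_def)
    then show "0 < measure M {x\<in>space M. 0 < dD x}" using pD by simp
  qed
  have strictC: "(\<integral>x. dC x * Y x \<partial>M) < c * m1"
  proof -
    have "0 < (\<integral>x. c * dC x - dC x * Y x \<partial>M)"
    proof (rule pos_int)
      show "integrable M (\<lambda>x. c * dC x - dC x * Y x)" using iC iCY by simp
      show "0 \<le> c * dC x - dC x * Y x" if "x \<in> space M" for x
      proof (cases "x \<in> C")
        case True
        then have "0 \<le> c - Y x" unfolding C_def by auto
        then have "0 \<le> dC x * (c - Y x)" using dCnn[OF that] by simp
        then show ?thesis by (simp add: algebra_simps)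
      next
        case False
        then show ?thesis unfolding dC_def by simp
      qed
      have eq: "\<And>x. c * dC x - dC x * Y x = dC x * (c - Y x)" by (simp add: algebra_simps)
      have "{x\<in>space M. 0 < c * dC x - dC x * Y x} = C"
        unfolding eq unfolding dC_def C_def by (auto simp: indicator_def zero_less_mult_iff)
      then show "0 < measure M {x\<in>space M. 0 < c * dC x - dC x * Y x}" using pC by simp
    qed
    also have "(\<integral>x. c * dC x - dC x * Y x \<partial>M) = c * m1 - (\<integral>x. dC x * Y x \<partial>M)"
      unfolding m1_def using iC iCY by simp
    finally show ?thesis by simp
  qed
  have weakD: "c * m2 \<le> (\<integral>x. dD x * Y x \<partial>M)"
  proof -
    have "0 \<le> (\<integral>x. dD x * Y x - c * dD x \<partial>M)"
    proof (intro integral_nonneg_AE AE_I2)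
      show "0 \<le> dD x * Y x - c * dD x" if "x \<in> space M" for x
        using dDnn[OF that] unfolding dD_def D_def by (auto simp: indicator_def algebra_simps)
    qed
    also have "(\<integral>x. dD x * Y x - c * dD x \<partial>M) = (\<integral>x. dD x * Y x \<partial>M) - c * m2"
      unfolding m2_def using iD iDY by simp
    finally show ?thesis by simp
  qed
  define s where "s = min m1 m2"
  have s: "0 < s" "s \<le> m1" "s \<le> m2" unfolding s_def using m1 m2 by auto
  define Z' where "Z' x = Z x + (s/m1) * dC x - (s/m2) * dD x" for x
  have Z'm[measurable]: "Z' \<in> borel_measurable M" unfolding Z'_def by measurable
  have disj: "x \<in> C \<Longrightarrow> x \<notin> D" for x unfolding C_def D_def by auto
  have r1: "0 \<le> s/m1" "s/m1 \<le> 1" using s m1 by auto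
  have r2: "0 \<le> s/m2" "s/m2 \<le> 1" using s m2 by auto
  have Z'b: "0 \<le> Z' x \<and> Z' x \<le> 1/l" if x: "x \<in> space M" for x
  proof (cases "x \<in> C")
    case True
    then have "x \<notin> D" by (rule disj)
    then have e: "Z' x = Z x + (s/m1) * (1/l - Z x)" unfolding Z'_def dC_def dD_def using True by simp
    have a: "0 \<le> 1/l - Z x" using Zb[OF x] by simp
    have "(s/m1) * (1/l - Z x) \<le> 1 * (1/l - Z x)" using r1 a by (intro mult_right_mono) auto
    moreover have "0 \<le> (s/m1) * (1/l - Z x)" using r1(1) a by (rule mult_nonneg_nonneg)
    ultimately show ?thesis unfolding e using Zp(2)[OF x] by simp
  next
    case False
    show ?thesis
    proof (cases "x \<in> D")
      case True
      then have e: "Z' x = (1 - s/m2) * Z x" unfolding Z'_def dC_def dD_def using False by (simp add: algebra_simps)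
      have "(1 - s/m2) * Z x \<le> 1 * Z x" using r2 Zp(2)[OF x] by (intro mult_right_mono) auto
      then show ?thesis unfolding e using r2 Zp(2)[OF x] Zb[OF x] by simp
    next
      case False2: False
      then have "Z' x = Z x" unfolding Z'_def dC_def dD_def using False by simp
      then show ?thesis using Zp(2)[OF x] Zb[OF x] by simp
    qed
  qed
  have iZ': "integrable M Z'" unfolding Z'_def using Zp(4) iC iD by simp
  have intZ': "integral\<^sup>L M Z' = 1"
    unfolding Z'_def using Zp(4,5) iC iD m1 m2 by (simp add: m1_def[symmetric] m2_def[symmetric])
  have "(\<integral>\<^sup>+ x. ennreal (Z' x) \<partial>M) = ennreal (integral\<^sup>L M Z')"
  proof (rule nn_integral_eq_integral[OF iZ'])
    show "AE x in M. 0 \<le> Z' x" using Z'b by (simp add: AE_I2)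
  qed
  then have "(\<integral>\<^sup>+ x. ennreal (Z' x) \<partial>M) = 1" using intZ' by simp
  then have "is_density M Z'" unfolding is_density_def using Z'b Z'm by blast
  moreover have "AE x in M. Z' x \<le> 1 / l" using Z'b by (simp add: AE_I2)
  ultimately have Z'D: "Z' \<in> D_lam M l" unfolding D_lam_def by blast
  have "(\<integral>x. Z' x * Y x \<partial>M) = (\<integral>x. Z x * Y x + (s/m1) * (dC x * Y x) - (s/m2) * (dD x * Y x) \<partial>M)"
    unfolding Z'_def by (rule Bochner_Integration.integral_cong) (auto simp: algebra_simps)
  also have "\<dots> = (\<integral>x. Z x * Y x \<partial>M) + (s/m1) * (\<integral>x. dC x * Y x \<partial>M) - (s/m2) * (\<integral>x. dD x * Y x \<partial>M)"
    using iZY iCY iDY by simp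
  also have "\<dots> < (\<integral>x. Z x * Y x \<partial>M)"
  proof -
    have "(s/m1) * (\<integral>x. dC x * Y x \<partial>M) < (s/m1) * (c * m1)"
      using strictC s m1 by (intro mult_strict_left_mono) auto
    moreover have "(s/m2) * (c * m2) \<le> (s/m2) * (\<integral>x. dD x * Y x \<partial>M)"
      using weakD s m2 by (intro mult_left_mono) auto
    moreover have "(s/m1) * (c * m1) = s * c" "(s/m2) * (c * m2) = s * c" using m1 m2 by auto
    ultimately show ?thesis by linarith
  qed
  finally have lt: "(\<integral>x. Z' x * Y x \<partial>M) < (\<integral>x. Z x * Y x \<partial>M)" .
  have "u_lam M l Y \<le> expQ M Z' Y" unfolding u_lam_def by (rule INF_lower[OF Z'D])
  also have "\<dots> = ereal (\<integral>x. Z' x * Y x \<partial>M)" by (rule expQ_Dlam[OF Z'D l Y])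
  finally show False using lt opt by simp
qed

end

context wvar
begin

lemma gap_lemma:
  fixes X W :: "'a \<Rightarrow> real"
  assumes X: "integrable M X" and W: "integrable M W"
    and xx: "x < x'" and ww: "w' < w"
    and pA: "0 < measure M {\<omega>\<in>space M. X \<omega> < x \<and> w < W \<omega>}"
    and pB: "0 < measure M {\<omega>\<in>space M. x' < X \<omega> \<and> W \<omega> < w'}"
    and l1: "measure M {\<omega>\<in>space M. X \<omega> \<le> x \<and> W \<omega> \<le> w'} < l"
    and l2: "l < measure M {\<omega>\<in>space M. W \<omega> < w \<or> X \<omega> < x'}"
  shows "u_lam M l X + u_lam M l W < u_lam M l (\<lambda>\<omega>. X \<omega> + W \<omega>)"
proof (rule ccontr)
  assume neg: "\<not> ?thesis"
  have Xm[measurable]: "X \<in> borel_measurable M" using X by auto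
  have Wm[measurable]: "W \<in> borel_measurable M" using W by auto
  define S where "S \<omega> = X \<omega> + W \<omega>" for \<omega>
  have Sm[measurable]: "S \<in> borel_measurable M" unfolding S_def by measurable
  have SI: "integrable M S" unfolding S_def using X W by simp
  have lpos: "0 < l" using l1 measure_nonneg[of M] by (meson le_less_trans)
  have llt: "l < 1" using l2 M.prob_le_1 by (meson less_le_trans)
  have l1': "l \<le> 1" using llt by simp
  define Z where "Z = npz M S l"
  have ZD: "Z \<in> D_lam M l" unfolding Z_def by (rule npz_Dlam[OF Sm lpos l1'])
  have Zb: "\<And>x. x \<in> space M \<Longrightarrow> Z x \<le> 1 / l" unfolding Z_def by (rule npz_bounds(2)[OF Sm lpos l1'])
  have Znn: "\<And>x. 0 \<le> Z x" unfolding Z_def by (rule npz_bounds(1)[OF Sm lpos l1'])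
  note Zp = density_props[OF ZD]
  have uS: "u_lam M l S = ereal (\<integral>\<omega>. Z \<omega> * S \<omega> \<partial>M)"
    unfolding Z_def by (rule np_min[OF Sm lpos llt SI, where k="qnt M S l"]) auto
  have iZX: "integrable M (\<lambda>\<omega>. Z \<omega> * X \<omega>)" by (rule Dlam_mult_integrable[OF ZD lpos X])
  have iZW: "integrable M (\<lambda>\<omega>. Z \<omega> * W \<omega>)" by (rule Dlam_mult_integrable[OF ZD lpos W])
  have ZS: "(\<integral>\<omega>. Z \<omega> * S \<omega> \<partial>M) = (\<integral>\<omega>. Z \<omega> * X \<omega> \<partial>M) + (\<integral>\<omega>. Z \<omega> * W \<omega> \<partial>M)"
    unfolding S_def using iZX iZW by (simp add: distrib_left)
  have uXle: "u_lam M l X \<le> ereal (\<integral>\<omega>. Z \<omega> * X \<omega> \<partial>M)"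
    using INF_lower[OF ZD, of "\<lambda>Q. expQ M Q X"] expQ_Dlam[OF ZD lpos X] unfolding u_lam_def by simp
  have uWle: "u_lam M l W \<le> ereal (\<integral>\<omega>. Z \<omega> * W \<omega> \<partial>M)"
    using INF_lower[OF ZD, of "\<lambda>Q. expQ M Q W"] expQ_Dlam[OF ZD lpos W] unfolding u_lam_def by simp
  obtain rX where rX: "u_lam M l X = ereal rX" using ulam_real[OF lpos l1' X] by blast
  obtain rW where rW: "u_lam M l W = ereal rW" using ulam_real[OF lpos l1' W] by blast
  have sup: "u_lam M l X + u_lam M l W \<le> u_lam M l S" unfolding S_def by (rule superadd[OF lpos X W])
  have eq: "u_lam M l X + u_lam M l W = u_lam M l S" using neg sup unfolding S_def by simp
  have optX: "u_lam M l X = ereal (\<integral>\<omega>. Z \<omega> * X \<omega> \<partial>M)"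
    using eq uS ZS uXle uWle unfolding rX rW by simp
  have optW: "u_lam M l W = ereal (\<integral>\<omega>. Z \<omega> * W \<omega> \<partial>M)"
    using eq uS ZS uXle uWle unfolding rX rW by simp
  have EX: "(AE \<omega> in M. \<not> (Z \<omega> < 1/l \<and> X \<omega> < c)) \<or> (AE \<omega> in M. \<not> (0 < Z \<omega> \<and> c < X \<omega>))" for c
  proof -
    have Zm[measurable]: "Z \<in> borel_measurable M" by (rule Zp(1))
    have e: "measure M {x\<in>space M. Z x < 1/l \<and> X x < c} = 0 \<or> measure M {x\<in>space M. 0 < Z x \<and> c < X x} = 0"
      by (rule exchange[OF lpos ZD _ X optX]) (rule Zb)
    have s1: "{x\<in>space M. Z x < 1/l \<and> X x < c} \<in> sets M" by measurable
    have s2: "{x\<in>space M. 0 < Z x \<and> c < X x} \<in> sets M" by measurable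
    show ?thesis using e M.prob_Collect_eq_0[OF s1] M.prob_Collect_eq_0[OF s2] by simp
  qed
  have EW: "(AE \<omega> in M. \<not> (Z \<omega> < 1/l \<and> W \<omega> < c)) \<or> (AE \<omega> in M. \<not> (0 < Z \<omega> \<and> c < W \<omega>))" for c
  proof -
    have Zm[measurable]: "Z \<in> borel_measurable M" by (rule Zp(1))
    have e: "measure M {x\<in>space M. Z x < 1/l \<and> W x < c} = 0 \<or> measure M {x\<in>space M. 0 < Z x \<and> c < W x} = 0"
      by (rule exchange[OF lpos ZD _ W optW]) (rule Zb)
    have s1: "{x\<in>space M. Z x < 1/l \<and> W x < c} \<in> sets M" by measurable
    have s2: "{x\<in>space M. 0 < Z x \<and> c < W x} \<in> sets M" by measurable
    show ?thesis using e M.prob_Collect_eq_0[OF s1] M.prob_Collect_eq_0[OF s2] by simp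
  qed
  have nA: "\<not> (AE \<omega> in M. \<not> (X \<omega> < x \<and> w < W \<omega>))"
    using pA by (subst M.prob_Collect_eq_0[symmetric]) auto
  have nB: "\<not> (AE \<omega> in M. \<not> (x' < X \<omega> \<and> W \<omega> < w'))"
    using pB by (subst M.prob_Collect_eq_0[symmetric]) auto
  have linv: "0 < 1 / l" using lpos by simp
  define G where "G = {\<omega>\<in>space M. X \<omega> \<le> x \<and> W \<omega> \<le> w'}"
  define G' where "G' = {\<omega>\<in>space M. W \<omega> < w \<or> X \<omega> < x'}"
  have [measurable]: "G \<in> sets M" "G' \<in> sets M" unfolding G_def G'_def by measurable
  have iG: "integrable M (indicator G :: 'a \<Rightarrow> real)"
    by (rule integrable_real_indicator) (auto simp: M.emeasure_le_1 less_top[symmetric])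
  have iG': "integrable M (indicator G' :: 'a \<Rightarrow> real)"
    by (rule integrable_real_indicator) (auto simp: M.emeasure_le_1 less_top[symmetric])
  show False
  proof (cases "AE \<omega> in M. \<not> (X \<omega> < x \<and> w < W \<omega> \<and> Z \<omega> < 1/l)")
    case False
    have "\<not> (AE \<omega> in M. \<not> (Z \<omega> < 1/l \<and> X \<omega> < x))"
    proof
      assume "AE \<omega> in M. \<not> (Z \<omega> < 1/l \<and> X \<omega> < x)"
      then have "AE \<omega> in M. \<not> (X \<omega> < x \<and> w < W \<omega> \<and> Z \<omega> < 1/l)" by eventually_elim auto
      then show False using False by simp
    qed
    then have a1: "AE \<omega> in M. \<not> (0 < Z \<omega> \<and> x < X \<omega>)" using EX[of x] by blast
    have "\<not> (AE \<omega> in M. \<not> (Z \<omega> < 1/l \<and> W \<omega> < w'))"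
    proof
      assume "AE \<omega> in M. \<not> (Z \<omega> < 1/l \<and> W \<omega> < w')"
      with a1 have "AE \<omega> in M. \<not> (x' < X \<omega> \<and> W \<omega> < w')"
      proof eventually_elim
        case (elim \<omega>)
        show ?case
        proof
          assume h: "x' < X \<omega> \<and> W \<omega> < w'"
          then have "Z \<omega> \<le> 0" using elim(1) xx by auto
          then have "Z \<omega> < 1/l" using linv by linarith
          then show False using elim h by auto
        qed
      qed
      then show False using nB by simp
    qed
    then have a2: "AE \<omega> in M. \<not> (0 < Z \<omega> \<and> w' < W \<omega>)" using EW[of w'] by blast
    have "AE \<omega> in M. Z \<omega> \<le> (1/l) * indicator G \<omega>"
      using a1 a2 AE_space
    proof eventually_elim
      case (elim \<omega>)
      show ?case
      proof (cases "0 < Z \<omega>")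
        case True
        then have "\<omega> \<in> G" using elim unfolding G_def by auto
        then show ?thesis using Zb[OF elim(3)] by simp
      next
        case False
        then show ?thesis using Znn[of \<omega>] linv by (simp add: indicator_def)
      qed
    qed
    then have "integral\<^sup>L M Z \<le> (\<integral>\<omega>. (1/l) * indicator G \<omega> \<partial>M)"
      using Zp(4) iG by (intro integral_mono_AE) auto
    also have "\<dots> = (1/l) * measure M G" using sets.sets_into_space[OF \<open>G \<in> sets M\<close>] by (simp add: Int_absorb2)
    finally have "1 \<le> measure M G / l" using Zp(5) by simp
    then have "l \<le> measure M G" using lpos by (simp add: field_simps)
    then show False using l1 unfolding G_def by simp
  next
    case True
    have "\<not> (AE \<omega> in M. \<not> (0 < Z \<omega> \<and> w < W \<omega>))"
    proof
      assume "AE \<omega> in M. \<not> (0 < Z \<omega> \<and> w < W \<omega>)"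
      with True have "AE \<omega> in M. \<not> (X \<omega> < x \<and> w < W \<omega>)"
      proof eventually_elim
        case (elim \<omega>)
        show ?case
        proof
          assume h: "X \<omega> < x \<and> w < W \<omega>"
          then have "1/l \<le> Z \<omega>" using elim h by (auto simp: not_less)
          then have "0 < Z \<omega>" using linv by linarith
          then show False using elim h by auto
        qed
      qed
      then show False using nA by simp
    qed
    then have b1: "AE \<omega> in M. \<not> (Z \<omega> < 1/l \<and> W \<omega> < w)" using EW[of w] by blast
    have b2: "AE \<omega> in M. \<not> (Z \<omega> < 1/l \<and> W \<omega> < w')"
    proof -
      have "\<not> (AE \<omega> in M. \<not> (0 < Z \<omega> \<and> w' < W \<omega>))"
      proof
        assume "AE \<omega> in M. \<not> (0 < Z \<omega> \<and> w' < W \<omega>)"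
        with True have "AE \<omega> in M. \<not> (X \<omega> < x \<and> w < W \<omega>)"
        proof eventually_elim
          case (elim \<omega>)
          show ?case
          proof
            assume h: "X \<omega> < x \<and> w < W \<omega>"
            then have "1/l \<le> Z \<omega>" using elim h by (auto simp: not_less)
            then have "0 < Z \<omega>" using linv by linarith
            then show False using elim h ww by auto
          qed
        qed
        then show False using nA by simp
      qed
      then show ?thesis using EW[of w'] by blast
    qed
    have "\<not> (AE \<omega> in M. \<not> (0 < Z \<omega> \<and> x' < X \<omega>))"
    proof
      assume "AE \<omega> in M. \<not> (0 < Z \<omega> \<and> x' < X \<omega>)"
      with b2 have "AE \<omega> in M. \<not> (x' < X \<omega> \<and> W \<omega> < w')"
      proof eventually_elim
        case (elim \<omega>)
        show ?case
        proof
          assume h: "x' < X \<omega> \<and> W \<omega> < w'"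
          then have "1/l \<le> Z \<omega>" using elim h by (auto simp: not_less)
          then have "0 < Z \<omega>" using linv by linarith
          then show False using elim h by auto
        qed
      qed
      then show False using nB by simp
    qed
    then have b3: "AE \<omega> in M. \<not> (Z \<omega> < 1/l \<and> X \<omega> < x')" using EX[of x'] by blast
    have "AE \<omega> in M. (1/l) * indicator G' \<omega> \<le> Z \<omega>"
      using b1 b3 AE_space
    proof eventually_elim
      case (elim \<omega>)
      show ?case
      proof (cases "\<omega> \<in> G'")
        case True
        then have "1/l \<le> Z \<omega>" using elim unfolding G'_def by auto
        then show ?thesis using True by simp
      next
        case False
        then show ?thesis using Znn[of \<omega>] by simp
      qed
    qed
    then have "(\<integral>\<omega>. (1/l) * indicator G' \<omega> \<partial>M) \<le> integral\<^sup>L M Z"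
      using Zp(4) iG' by (intro integral_mono_AE) auto
    moreover have "(\<integral>\<omega>. (1/l) * indicator G' \<omega> \<partial>M) = (1/l) * measure M G'"
      using sets.sets_into_space[OF \<open>G' \<in> sets M\<close>] by (simp add: Int_absorb2)
    ultimately have "measure M G' / l \<le> 1" using Zp(5) by simp
    then have "measure M G' \<le> l" using lpos by (simp add: field_simps)
    then show False using l2 unfolding G'_def by simp
  qed
qed

end

context wvar
begin

lemma noncomon:
  fixes X W :: "'a \<Rightarrow> real"
  assumes [measurable]: "X \<in> borel_measurable M" "W \<in> borel_measurable M"
    and nc: "\<not> comonotone M X W"
  shows "\<exists>x x' w w'. x < x' \<and> w' < w \<and> 0 < measure M {\<omega>\<in>space M. X \<omega> < x \<and> w < W \<omega>}
     \<and> 0 < measure M {\<omega>\<in>space M. x' < X \<omega> \<and> W \<omega> < w'}"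
proof (rule ccontr)
  assume H: "\<not> ?thesis"
  define A where "A a c = {\<omega>\<in>space M. X \<omega> < real_of_rat a \<and> real_of_rat c < W \<omega>}" for a c
  define B where "B b d = {\<omega>\<in>space M. real_of_rat b < X \<omega> \<and> W \<omega> < real_of_rat d}" for b d
  have AB[measurable]: "A a c \<in> sets M" "B b d \<in> sets M" for a b c d unfolding A_def B_def by measurable
  have z: "measure M (A a c) = 0 \<or> measure M (B b d) = 0" if "a < b" "d < c" for a b c d
  proof -
    have "real_of_rat a < real_of_rat b" "real_of_rat d < real_of_rat c" using that by (simp_all add: of_rat_less)
    then have "\<not> (0 < measure M (A a c) \<and> 0 < measure M (B b d))" using H unfolding A_def B_def by blast
    then show ?thesis using measure_nonneg[of M "A a c"] measure_nonneg[of M "B b d"] by linarith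
  qed
  have AE1: "AE p in M \<Otimes>\<^sub>M M. (a < b \<and> d < c) \<longrightarrow> p \<notin> A a c \<times> B b d \<and> p \<notin> B b d \<times> A a c" for a b c d
  proof (cases "a < b \<and> d < c")
    case True
    then have e: "emeasure M (A a c) * emeasure M (B b d) = 0" "emeasure M (B b d) * emeasure M (A a c) = 0"
      using z[of a b d c] by (auto simp: M.emeasure_eq_measure)
    have n1: "A a c \<times> B b d \<in> null_sets (M \<Otimes>\<^sub>M M)"
      using e(1) by (simp add: null_sets_def M.emeasure_pair_measure_Times)
    have n2: "B b d \<times> A a c \<in> null_sets (M \<Otimes>\<^sub>M M)"
      using e(2) by (simp add: null_sets_def M.emeasure_pair_measure_Times)
    have "AE p in M \<Otimes>\<^sub>M M. p \<notin> A a c \<times> B b d" using n1 AE_iff_null_sets[of _ "M \<Otimes>\<^sub>M M"] by auto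
    moreover have "AE p in M \<Otimes>\<^sub>M M. p \<notin> B b d \<times> A a c" using n2 AE_iff_null_sets[of _ "M \<Otimes>\<^sub>M M"] by auto
    ultimately show ?thesis by eventually_elim auto
  next
    case False
    then show ?thesis by (intro AE_I2) auto
  qed
  then have "AE p in M \<Otimes>\<^sub>M M. \<forall>a b c d. (a < b \<and> d < c) \<longrightarrow> p \<notin> A a c \<times> B b d \<and> p \<notin> B b d \<times> A a c"
    by (simp add: AE_all_countable)
  then have "comonotone M X W" unfolding comonotone_def
    using AE_space[of "M \<Otimes>\<^sub>M M"]
  proof eventually_elim
    case (elim p)
    obtain p1 p2 where p: "p = (p1, p2)" by (cases p)
    have sp: "p1 \<in> space M" "p2 \<in> space M" using elim(2) unfolding p by (auto simp: space_pair_measure)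
    show ?case
    proof (rule ccontr)
      assume "\<not> 0 \<le> (X (snd p) - X (fst p)) * (W (snd p) - W (fst p))"
      then have "(X p2 - X p1) * (W p2 - W p1) < 0" unfolding p by simp
      then have cases: "(X p1 < X p2 \<and> W p2 < W p1) \<or> (X p2 < X p1 \<and> W p1 < W p2)"
        by (auto simp: mult_less_0_iff)
      then show False
      proof
        assume h: "X p1 < X p2 \<and> W p2 < W p1"
        obtain a where a: "X p1 < real_of_rat a" "real_of_rat a < X p2" using of_rat_dense h by blast
        obtain b where b: "real_of_rat a < real_of_rat b" "real_of_rat b < X p2" using of_rat_dense a(2) by blast
        obtain d where d: "W p2 < real_of_rat d" "real_of_rat d < W p1" using of_rat_dense h by blast
        obtain c where c: "real_of_rat d < real_of_rat c" "real_of_rat c < W p1" using of_rat_dense d(2) by blast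
        have "a < b" "d < c" using b(1) c(1) by (simp_all add: of_rat_less)
        moreover have "p \<in> A a c \<times> B b d" unfolding p A_def B_def using sp a b c d by auto
        ultimately show False using elim(1) by blast
      next
        assume h: "X p2 < X p1 \<and> W p1 < W p2"
        obtain a where a: "X p2 < real_of_rat a" "real_of_rat a < X p1" using of_rat_dense h by blast
        obtain b where b: "real_of_rat a < real_of_rat b" "real_of_rat b < X p1" using of_rat_dense a(2) by blast
        obtain d where d: "W p1 < real_of_rat d" "real_of_rat d < W p2" using of_rat_dense h by blast
        obtain c where c: "real_of_rat d < real_of_rat c" "real_of_rat c < W p2" using of_rat_dense d(2) by blast
        have "a < b" "d < c" using b(1) c(1) by (simp_all add: of_rat_less)
        moreover have "p \<in> B b d \<times> A a c" unfolding p A_def B_def using sp a b c d by auto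
        ultimately show False using elim(1) by blast
      qed
    qed
  qed
  then show False using nc by simp
qed

lemma L1D_bound:
  fixes X :: "'a \<Rightarrow> real"
  assumes L: "L1_D M D X" and D: "\<And>Z. Z \<in> D \<Longrightarrow> is_density M Z"
  shows "\<exists>C\<ge>0. \<forall>Z\<in>D. (\<integral>\<^sup>+x. ennreal (Z x * \<bar>X x\<bar>) \<partial>M) \<le> ennreal C"
proof -
  have Xm[measurable]: "X \<in> borel_measurable M" using L unfolding L1_D_def by blast
  have T: "(\<lambda>n::nat. SUP Z\<in>D. \<integral>\<^sup>+ x. ennreal (Z x * \<bar>X x\<bar> * indicator {y. \<bar>X y\<bar> > real n} x) \<partial>M)
        \<longlonglongrightarrow> 0" using L unfolding L1_D_def by blast
  have "eventually (\<lambda>n::nat. (SUP Z\<in>D. \<integral>\<^sup>+ x. ennreal (Z x * \<bar>X x\<bar> * indicator {y. \<bar>X y\<bar> > real n} x) \<partial>M) < 1) sequentially"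
    by (rule order_tendstoD(2)[OF T]) simp
  then obtain n where n: "(SUP Z\<in>D. \<integral>\<^sup>+ x. ennreal (Z x * \<bar>X x\<bar> * indicator {y. \<bar>X y\<bar> > real n} x) \<partial>M) < 1"
    by (auto simp: eventually_sequentially)
  show ?thesis
  proof (intro exI[of _ "real n + 1"] conjI ballI)
    show "0 \<le> real n + 1" by simp
    fix Z assume Z: "Z \<in> D"
    have Zd: "is_density M Z" by (rule D[OF Z])
    have Zm[measurable]: "Z \<in> borel_measurable M" and Znn: "\<And>x. x \<in> space M \<Longrightarrow> 0 \<le> Z x"
      and Z1: "(\<integral>\<^sup>+ x. ennreal (Z x) \<partial>M) = 1" using Zd unfolding is_density_def by auto
    have tail: "(\<integral>\<^sup>+ x. ennreal (Z x * \<bar>X x\<bar> * indicator {y. \<bar>X y\<bar> > real n} x) \<partial>M) \<le> 1"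
      using SUP_upper[OF Z, of "\<lambda>Z. \<integral>\<^sup>+ x. ennreal (Z x * \<bar>X x\<bar> * indicator {y. \<bar>X y\<bar> > real n} x) \<partial>M"] n
      by simp
    have tail': "(\<integral>\<^sup>+ x. ennreal (if real n < \<bar>X x\<bar> then Z x * \<bar>X x\<bar> else 0) \<partial>M) \<le> 1"
    proof -
      have "(\<integral>\<^sup>+ x. ennreal (if real n < \<bar>X x\<bar> then Z x * \<bar>X x\<bar> else 0) \<partial>M)
          = (\<integral>\<^sup>+ x. ennreal (Z x * \<bar>X x\<bar> * indicator {y. \<bar>X y\<bar> > real n} x) \<partial>M)"
        by (intro nn_integral_cong) (simp add: indicator_def)
      then show ?thesis using tail by simp
    qed
    have "(\<integral>\<^sup>+x. ennreal (Z x * \<bar>X x\<bar>) \<partial>M)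
        \<le> (\<integral>\<^sup>+x. ennreal (real n) * ennreal (Z x) + ennreal (if real n < \<bar>X x\<bar> then Z x * \<bar>X x\<bar> else 0) \<partial>M)"
    proof (rule nn_integral_mono)
      fix x assume x: "x \<in> space M"
      show "ennreal (Z x * \<bar>X x\<bar>) \<le> ennreal (real n) * ennreal (Z x) + ennreal (if real n < \<bar>X x\<bar> then Z x * \<bar>X x\<bar> else 0)"
      proof (cases "real n < \<bar>X x\<bar>")
        case True
        then show ?thesis by (simp add: add_increasing)
      next
        case False
        then have "Z x * \<bar>X x\<bar> \<le> Z x * real n" using Znn[OF x] by (intro mult_left_mono) auto
        then have "Z x * \<bar>X x\<bar> \<le> real n * Z x" by (simp add: mult.commute)
        then have "ennreal (Z x * \<bar>X x\<bar>) \<le> ennreal (real n * Z x)" by (rule ennreal_leI)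
        also have "\<dots> = ennreal (real n) * ennreal (Z x)" using Znn[OF x] by (simp add: ennreal_mult)
        finally show ?thesis by (simp add: add_increasing2)
      qed
    qed
    also have "\<dots> = ennreal (real n) * (\<integral>\<^sup>+x. ennreal (Z x) \<partial>M) + (\<integral>\<^sup>+x. ennreal (if real n < \<bar>X x\<bar> then Z x * \<bar>X x\<bar> else 0) \<partial>M)"
      by (subst nn_integral_add) (auto simp: nn_integral_cmult)
    also have "\<dots> \<le> ennreal (real n) * 1 + 1" unfolding Z1 using tail' by (intro add_left_mono) simp
    also have "\<dots> = ennreal (real n + 1)" by (simp add: ennreal_plus)
    finally show "(\<integral>\<^sup>+x. ennreal (Z x * \<bar>X x\<bar>) \<partial>M) \<le> ennreal (real n + 1)" .
  qed
qed

lemma Dmu_int: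
  fixes X :: "'a \<Rightarrow> real"
  assumes Zd: "is_density M Z" and B: "(\<integral>\<^sup>+x. ennreal (Z x * \<bar>X x\<bar>) \<partial>M) \<le> ennreal C" and C: "0 \<le> C"
    and Xm[measurable]: "X \<in> borel_measurable M"
  shows "integrable M (\<lambda>x. Z x * X x)" "expQ M Z X = ereal (\<integral>x. Z x * X x \<partial>M)"
    "- C \<le> (\<integral>x. Z x * X x \<partial>M)"
proof -
  have Zm[measurable]: "Z \<in> borel_measurable M" and Znn: "\<And>x. x \<in> space M \<Longrightarrow> 0 \<le> Z x"
    using Zd unfolding is_density_def by auto
  have eqn: "(\<integral>\<^sup>+x. ennreal (norm (Z x * X x)) \<partial>M) = (\<integral>\<^sup>+x. ennreal (Z x * \<bar>X x\<bar>) \<partial>M)"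
    by (rule nn_integral_cong) (simp add: abs_mult Znn)
  show int: "integrable M (\<lambda>x. Z x * X x)"
  proof (rule integrableI_bounded)
    show "(\<integral>\<^sup>+x. ennreal (norm (Z x * X x)) \<partial>M) < \<infinity>" unfolding eqn using B
      by (simp add: le_less_trans[OF _ ennreal_less_top])
  qed measurable
  show "expQ M Z X = ereal (\<integral>x. Z x * X x \<partial>M)" unfolding expQ_def by (rule ext_int_integrable[OF int])
  have iabs: "integrable M (\<lambda>x. Z x * \<bar>X x\<bar>)"
    using integrable_abs[OF int] by (rule Bochner_Integration.integrable_cong[THEN iffD1, rotated 2]) (auto simp: abs_mult Znn)
  have "(\<integral>x. Z x * \<bar>X x\<bar> \<partial>M) = enn2real (\<integral>\<^sup>+x. ennreal (Z x * \<bar>X x\<bar>) \<partial>M)"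
    by (rule integral_eq_nn_integral) (auto simp: Znn)
  also have "\<dots> \<le> enn2real (ennreal C)" by (rule enn2real_mono[OF B]) simp
  also have "\<dots> = C" using C by simp
  finally have le: "(\<integral>x. Z x * \<bar>X x\<bar> \<partial>M) \<le> C" .
  have "(\<integral>x. - (Z x * \<bar>X x\<bar>) \<partial>M) \<le> (\<integral>x. Z x * X x \<partial>M)"
  proof (rule integral_mono)
    show "integrable M (\<lambda>x. - (Z x * \<bar>X x\<bar>))" using iabs by simp
    show "integrable M (\<lambda>x. Z x * X x)" by (rule int)
    fix x assume x: "x \<in> space M"
    show "- (Z x * \<bar>X x\<bar>) \<le> Z x * X x"
      using mult_left_mono[of "- \<bar>X x\<bar>" "X x" "Z x"] Znn[OF x] by simp
  qed
  then show "- C \<le> (\<integral>x. Z x * X x \<partial>M)" using le by simp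
qed

end

context wvar
begin

lemma Dlam_anti: "0 < l1 \<Longrightarrow> l1 \<le> l2 \<Longrightarrow> D_lam M l2 \<subseteq> D_lam M l1"
proof
  fix Z assume l: "0 < l1" "l1 \<le> l2" and Z: "Z \<in> D_lam M l2"
  have "1 / l2 \<le> 1 / l1" using l by (intro divide_left_mono) auto
  moreover have "AE x in M. Z x \<le> 1 / l2" using Z unfolding D_lam_def by auto
  ultimately have "AE x in M. Z x \<le> 1 / l1" by (auto elim: eventually_mono)
  then show "Z \<in> D_lam M l1" using Z unfolding D_lam_def by auto
qed

lemma ulam_mono: "0 < l1 \<Longrightarrow> l1 \<le> l2 \<Longrightarrow> u_lam M l1 Y \<le> u_lam M l2 Y"
  unfolding u_lam_def by (rule INF_superset_mono[OF Dlam_anti]) auto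

definition ul :: "('a \<Rightarrow> real) \<Rightarrow> real \<Rightarrow> real" where
  "ul Y l = indicator {0<..1} l * real_of_ereal (u_lam M l Y)"

lemma ul_meas:
  assumes Y: "integrable M Y"
  shows "ul Y \<in> borel_measurable mu"
proof -
  have "mono_on {0<..1} (\<lambda>l. real_of_ereal (u_lam M l Y))"
  proof (rule mono_onI)
    fix l1 l2 :: real assume l: "l1 \<in> {0<..1}" "l2 \<in> {0<..1}" "l1 \<le> l2"
    obtain r1 where r1: "u_lam M l1 Y = ereal r1" using ulam_real[OF _ _ Y, of l1] l by auto
    obtain r2 where r2: "u_lam M l2 Y = ereal r2" using ulam_real[OF _ _ Y, of l2] l by auto
    have "u_lam M l1 Y \<le> u_lam M l2 Y" using l by (intro ulam_mono) auto
    then show "real_of_ereal (u_lam M l1 Y) \<le> real_of_ereal (u_lam M l2 Y)" using r1 r2 by simp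
  qed
  then have "(\<lambda>l. real_of_ereal (u_lam M l Y)) \<in> borel_measurable (restrict_space borel {0<..1})"
    by (rule borel_measurable_mono_on_fnc)
  then have "(\<lambda>l. indicator {0<..1::real} l *\<^sub>R real_of_ereal (u_lam M l Y)) \<in> borel_measurable borel"
    by (subst (asm) borel_measurable_restrict_space_iff) auto
  then have "ul Y \<in> borel_measurable borel" unfolding ul_def by simp
  then show ?thesis using measurable_cong_sets[OF sets_mu refl] by simp
qed

lemma ul_AE:
  assumes Y: "integrable M Y"
  shows "AE l in mu. u_lam M l Y = ereal (ul Y l)"
  using AE_mu01
proof eventually_elim
  case (elim l)
  then show ?case unfolding ul_def using ulam_real[OF _ _ Y, of l] by simp
qed

lemma umu_conv:
  assumes Y: "integrable M Y" and f1: "u_mu M mu Y \<noteq> \<infinity>" and f2: "u_mu M mu Y \<noteq> -\<infinity>"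
  shows "integrable mu (ul Y)" "u_mu M mu Y = ereal (integral\<^sup>L mu (ul Y))"
proof -
  have e: "u_mu M mu Y = ext_int mu (\<lambda>l. ereal (ul Y l))"
    unfolding u_mu_def by (rule ext_int_cong_AE[OF ul_AE[OF Y]])
  show int: "integrable mu (ul Y)"
    using f1 f2 unfolding e by (intro ext_int_finite_integrable ul_meas[OF Y])
  show "u_mu M mu Y = ereal (integral\<^sup>L mu (ul Y))" unfolding e by (rule ext_int_integrable[OF int])
qed

lemma forward:
  fixes X W :: "'a \<Rightarrow> real"
  assumes supp: "measure_support mu = {0..1}" and X: "integrable M X" and W: "integrable M W"
    and uX: "u_mu M mu X = ereal rX" and uW: "u_mu M mu W = ereal rW"
    and le: "u_mu M mu (\<lambda>\<omega>. X \<omega> + W \<omega>) \<le> ereal (rX + rW)"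
  shows "comonotone M X W"
proof (rule ccontr)
  assume nc: "\<not> comonotone M X W"
  have Xm[measurable]: "X \<in> borel_measurable M" using X by auto
  have Wm[measurable]: "W \<in> borel_measurable M" using W by auto
  obtain x x' w w' where xx: "x < x'" and ww: "w' < w"
    and pA: "0 < measure M {\<omega>\<in>space M. X \<omega> < x \<and> w < W \<omega>}"
    and pB: "0 < measure M {\<omega>\<in>space M. x' < X \<omega> \<and> W \<omega> < w'}"
    using noncomon[OF Xm Wm nc] by blast
  define A where "A = {\<omega>\<in>space M. X \<omega> < x \<and> w < W \<omega>}"
  define G where "G = {\<omega>\<in>space M. X \<omega> \<le> x \<and> W \<omega> \<le> w'}"
  define G' where "G' = {\<omega>\<in>space M. W \<omega> < w \<or> X \<omega> < x'}"
  have [measurable]: "A \<in> sets M" "G \<in> sets M" "G' \<in> sets M" unfolding A_def G_def G'_def by measurable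
  define \<alpha> where "\<alpha> = measure M G"
  define \<beta> where "\<beta> = measure M G'"
  have "measure M G + measure M A = measure M (G \<union> A)"
    by (rule M.finite_measure_Union[symmetric]) (use ww in \<open>auto simp: G_def A_def\<close>)
  also have "\<dots> \<le> measure M G'"
    by (rule M.finite_measure_mono) (use xx in \<open>auto simp: G_def A_def G'_def\<close>)
  finally have ab: "\<alpha> < \<beta>" using pA unfolding \<alpha>_def \<beta>_def A_def by simp
  have a0: "0 \<le> \<alpha>" unfolding \<alpha>_def by simp
  have b1: "\<beta> \<le> 1" unfolding \<beta>_def by simp
  define I where "I = {\<alpha><..<\<beta>}"
  have Isets: "I \<in> sets mu" unfolding I_def using sets_mu by simp
  have Ipos: "0 < emeasure mu I"
  proof -
    define m where "m = (\<alpha> + \<beta>) / 2"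
    have "m \<in> measure_support mu" unfolding supp m_def using a0 b1 ab by auto
    then have "0 < emeasure mu (ball m ((\<beta> - \<alpha>) / 2))" unfolding measure_support_def using ab by auto
    also have "ball m ((\<beta> - \<alpha>) / 2) = I" unfolding ball_eq_greaterThanLessThan I_def m_def
      by (simp add: field_simps)
    finally show ?thesis .
  qed
  have gap: "u_lam M l X + u_lam M l W < u_lam M l (\<lambda>\<omega>. X \<omega> + W \<omega>)" if "l \<in> I" for l
    using that unfolding I_def \<alpha>_def \<beta>_def G_def G'_def
    by (intro gap_lemma[OF X W xx ww pA pB]) auto
  define S where "S \<omega> = X \<omega> + W \<omega>" for \<omega>
  have SI: "integrable M S" unfolding S_def using X W by simp
  note cX = umu_conv[OF X, unfolded uX, simplified]
  note cW = umu_conv[OF W, unfolded uW, simplified]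
  have ab_le: "AE l in mu. ereal (ul X l + ul W l) \<le> u_lam M l S"
    using AE_mu01 ul_AE[OF X] ul_AE[OF W]
  proof eventually_elim
    case (elim l)
    have "u_lam M l X + u_lam M l W \<le> u_lam M l S" unfolding S_def by (rule superadd) (use elim X W in auto)
    then show ?case using elim by simp
  qed
  have "ext_int mu (\<lambda>l. ereal (ul X l + ul W l)) \<le> u_mu M mu S"
    unfolding u_mu_def by (rule ext_int_mono_AE[OF ab_le])
  moreover have "ext_int mu (\<lambda>l. ereal (ul X l + ul W l)) = ereal (integral\<^sup>L mu (ul X) + integral\<^sup>L mu (ul W))"
    using cX(1) cW(1) by (subst ext_int_integrable) auto
  ultimately have lo: "ereal (integral\<^sup>L mu (ul X) + integral\<^sup>L mu (ul W)) \<le> u_mu M mu S" by simp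
  have up: "u_mu M mu S \<le> ereal (rX + rW)" using le unfolding S_def .
  have fin1: "u_mu M mu S \<noteq> \<infinity>" using up by auto
  have fin2: "u_mu M mu S \<noteq> -\<infinity>" using lo by auto
  have cS1: "integrable mu (ul S)" by (rule umu_conv(1)[OF SI fin1 fin2])
  have cS2: "u_mu M mu S = ereal (integral\<^sup>L mu (ul S))" by (rule umu_conv(2)[OF SI fin1 fin2])
  have intle: "integral\<^sup>L mu (ul S) \<le> integral\<^sup>L mu (ul X) + integral\<^sup>L mu (ul W)"
    using up cS2 cX(2) cW(2) by simp
  define f where "f l = ul S l - ul X l - ul W l" for l
  have fi: "integrable mu f" unfolding f_def using cS1 cX(1) cW(1) by simp
  have fnn: "AE l in mu. 0 \<le> f l"
    using ab_le ul_AE[OF SI] by eventually_elim (auto simp: f_def)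
  have "integral\<^sup>L mu f = integral\<^sup>L mu (ul S) - integral\<^sup>L mu (ul X) - integral\<^sup>L mu (ul W)"
    unfolding f_def using cS1 cX(1) cW(1) by simp
  then have "integral\<^sup>L mu f \<le> 0" using intle by simp
  moreover have "0 \<le> integral\<^sup>L mu f" using fnn by (rule integral_nonneg_AE)
  ultimately have "integral\<^sup>L mu f = 0" by simp
  then have f0: "AE l in mu. f l = 0" using integral_nonneg_eq_0_iff_AE[OF fi fnn] by simp
  have "AE l in mu. l \<notin> I"
    using f0 ul_AE[OF X] ul_AE[OF W] ul_AE[OF SI]
  proof eventually_elim
    case (elim l)
    show ?case
    proof
      assume "l \<in> I"
      then have "u_lam M l X + u_lam M l W < u_lam M l S" using gap unfolding S_def by simp
      then show False using elim unfolding f_def by simp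
    qed
  qed
  then have "I \<in> null_sets mu" using AE_iff_null_sets[OF Isets] by simp
  then show False using Ipos by (simp add: null_sets_def)
qed

end

context wvar
begin

lemma thresh:
  fixes X :: "'a \<Rightarrow> real"
  assumes AB[measurable]: "A \<in> sets M" "B \<in> sets M" and pA: "0 < measure M A" and pB: "0 < measure M B"
    and Xm[measurable]: "X \<in> borel_measurable M"
    and H: "AE p in M \<Otimes>\<^sub>M M. fst p \<in> A \<longrightarrow> snd p \<in> B \<longrightarrow> X (fst p) \<le> X (snd p)"
  shows "\<exists>k. (AE x in M. x \<in> A \<longrightarrow> X x \<le> k) \<and> (AE x in M. x \<in> B \<longrightarrow> k \<le> X x)"
proof -
  have key: "AE x in M. x \<in> B \<longrightarrow> t \<le> X x" if nt: "\<not> (AE x in M. x \<in> A \<longrightarrow> X x \<le> t)" for t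
  proof -
    define A' where "A' = {x\<in>space M. x \<in> A \<and> t < X x}"
    define B' where "B' = {x\<in>space M. x \<in> B \<and> X x < t}"
    have [measurable]: "A' \<in> sets M" "B' \<in> sets M" unfolding A'_def B'_def by measurable
    have "emeasure M A' \<noteq> 0"
    proof
      assume "emeasure M A' = 0"
      then have "AE x in M. x \<in> A \<longrightarrow> X x \<le> t"
        by (subst AE_iff_measurable[OF \<open>A' \<in> sets M\<close>]) (auto simp: A'_def)
      then show False using nt by simp
    qed
    have "AE p in M \<Otimes>\<^sub>M M. p \<notin> A' \<times> B'"
      using H by eventually_elim (auto simp: A'_def B'_def)
    then have "A' \<times> B' \<in> null_sets (M \<Otimes>\<^sub>M M)"
      by (subst AE_iff_null_sets) auto
    then have "emeasure M A' * emeasure M B' = 0"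
      by (simp add: null_sets_def M.emeasure_pair_measure_Times)
    then have "emeasure M B' = 0" using \<open>emeasure M A' \<noteq> 0\<close> by simp
    then show ?thesis
      by (subst AE_iff_measurable[OF \<open>B' \<in> sets M\<close>]) (auto simp: B'_def not_le)
  qed
  define T where "T = {t. AE x in M. x \<in> A \<longrightarrow> X x \<le> t}"
  have Tne: "T \<noteq> {}"
  proof
    assume "T = {}"
    then have "AE x in M. x \<in> B \<longrightarrow> real n \<le> X x" for n :: nat
      by (intro key) (auto simp: T_def)
    then have "AE x in M. \<forall>n::nat. x \<in> B \<longrightarrow> real n \<le> X x" by (intro AE_all_countable[THEN iffD2] allI)
    then have "AE x in M. x \<notin> B"
    proof eventually_elim
      case (elim x)
      obtain n where "X x < real n" using reals_Archimedean2 by blast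
      then show ?case using elim[rule_format, of n] by auto
    qed
    then have "measure M B = 0" using M.prob_eq_0[OF AB(2)] by simp
    then show False using pB by simp
  qed
  obtain n :: nat where n: "- real n \<notin> T"
  proof (rule ccontr)
    assume "\<not> thesis"
    then have "\<forall>n::nat. - real n \<in> T" using that by blast
    then have "AE x in M. \<forall>n::nat. x \<in> A \<longrightarrow> X x \<le> - real n" by (intro AE_all_countable[THEN iffD2] allI) (simp add: T_def)
    then have "AE x in M. x \<notin> A"
    proof eventually_elim
      case (elim x)
      obtain n where "- X x < real n" using reals_Archimedean2 by blast
      then show ?case using elim[rule_format, of n] by auto
    qed
    then have "measure M A = 0" using M.prob_eq_0[OF AB(1)] by simp
    then show False using pA by simp
  qed
  have up: "s \<in> T" if "t \<in> T" "t \<le> s" for t s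
    using that unfolding T_def by (auto elim: eventually_mono)
  have bdd: "bdd_below T"
  proof (rule bdd_belowI)
    fix t assume "t \<in> T"
    show "- real n \<le> t"
    proof (rule ccontr)
      assume "\<not> - real n \<le> t"
      then have "- real n \<in> T" using up[OF \<open>t \<in> T\<close>] by simp
      then show False using n by simp
    qed
  qed
  define k where "k = Inf T"
  have "AE x in M. x \<in> A \<longrightarrow> X x \<le> k + inverse (real (Suc m))" for m
  proof -
    have "Inf T < k + inverse (real (Suc m))" unfolding k_def by simp
    then obtain t where "t \<in> T" "t < k + inverse (real (Suc m))" using cInf_lessD[OF Tne] by blast
    then have "k + inverse (real (Suc m)) \<in> T" using up by simp
    then show ?thesis unfolding T_def by simp
  qed
  then have "AE x in M. \<forall>m. x \<in> A \<longrightarrow> X x \<le> k + inverse (real (Suc m))" by (intro AE_all_countable[THEN iffD2] allI)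
  then have r1: "AE x in M. x \<in> A \<longrightarrow> X x \<le> k"
  proof eventually_elim
    case (elim x)
    show ?case
    proof
      assume "x \<in> A"
      show "X x \<le> k"
      proof (rule ccontr)
        assume "\<not> X x \<le> k"
        then obtain m where m: "inverse (real (Suc m)) < X x - k" using reals_Archimedean[of "X x - k"] by auto
        have "X x \<le> k + inverse (real (Suc m))" using elim \<open>x \<in> A\<close> by blast
        then show False using m by linarith
      qed
    qed
  qed
  have "AE x in M. x \<in> B \<longrightarrow> k - inverse (real (Suc m)) \<le> X x" for m
  proof (rule key)
    show "\<not> (AE x in M. x \<in> A \<longrightarrow> X x \<le> k - inverse (real (Suc m)))"
    proof
      assume "AE x in M. x \<in> A \<longrightarrow> X x \<le> k - inverse (real (Suc m))"
      then have "k - inverse (real (Suc m)) \<in> T" unfolding T_def by simp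
      then have "k \<le> k - inverse (real (Suc m))" unfolding k_def using bdd by (rule cInf_lower)
      then show False by simp
    qed
  qed
  then have "AE x in M. \<forall>m. x \<in> B \<longrightarrow> k - inverse (real (Suc m)) \<le> X x" by (intro AE_all_countable[THEN iffD2] allI)
  then have r2: "AE x in M. x \<in> B \<longrightarrow> k \<le> X x"
  proof eventually_elim
    case (elim x)
    show ?case
    proof
      assume "x \<in> B"
      show "k \<le> X x"
      proof (rule ccontr)
        assume "\<not> k \<le> X x"
        then obtain m where m: "inverse (real (Suc m)) < k - X x" using reals_Archimedean[of "k - X x"] by auto
        have "k - inverse (real (Suc m)) \<le> X x" using elim \<open>x \<in> B\<close> by blast
        then show False using m by linarith
      qed
    qed
  qed
  show ?thesis using r1 r2 by blast
qed

lemma comon_thresh: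
  fixes X W :: "'a \<Rightarrow> real"
  assumes cm: "comonotone M X W" and Xm[measurable]: "X \<in> borel_measurable M"
    and Wm[measurable]: "W \<in> borel_measurable M"
    and l: "0 < l" "l < 1"
  shows "\<exists>k. (AE x in M. X x + W x \<le> qnt M (\<lambda>x. X x + W x) l \<longrightarrow> X x \<le> k)
            \<and> (AE x in M. qnt M (\<lambda>x. X x + W x) l \<le> X x + W x \<longrightarrow> k \<le> X x)"
proof -
  define S where "S x = X x + W x" for x
  have Sm[measurable]: "S \<in> borel_measurable M" unfolding S_def by measurable
  define q where "q = qnt M S l"
  define A where "A = {x\<in>space M. S x \<le> q}"
  define B where "B = {x\<in>space M. q \<le> S x}"
  have [measurable]: "A \<in> sets M" "B \<in> sets M" unfolding A_def B_def by measurable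
  note qp = qnt_props[OF Sm l]
  have pA: "0 < measure M A" using qp(1) l unfolding A_def cdfS_def q_def by simp
  have "space M - B = {x\<in>space M. S x < q}" unfolding B_def by auto
  moreover have "measure M (space M - B) = 1 - measure M B" by (rule M.prob_compl) simp
  ultimately have "measure M B = 1 - cdfSm M S q" unfolding cdfSm_def by simp
  then have pB: "0 < measure M B" using qp(2) l unfolding q_def by simp
  have H: "AE p in M \<Otimes>\<^sub>M M. fst p \<in> A \<longrightarrow> snd p \<in> B \<longrightarrow> X (fst p) \<le> X (snd p)"
    using cm unfolding comonotone_def
  proof eventually_elim
    case (elim p)
    show ?case
    proof (intro impI)
      assume "fst p \<in> A" "snd p \<in> B"
      then have "S (fst p) \<le> S (snd p)" unfolding A_def B_def by auto
      then have s: "(X (snd p) - X (fst p)) + (W (snd p) - W (fst p)) \<ge> 0" unfolding S_def by simp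
      show "X (fst p) \<le> X (snd p)"
      proof (rule ccontr)
        assume "\<not> X (fst p) \<le> X (snd p)"
        then have "X (snd p) - X (fst p) < 0" by simp
        then have "W (snd p) - W (fst p) \<le> 0" using elim by (simp add: zero_le_mult_iff)
        then show False using s \<open>X (snd p) - X (fst p) < 0\<close> by linarith
      qed
    qed
  qed
  obtain k where "AE x in M. x \<in> A \<longrightarrow> X x \<le> k" "AE x in M. x \<in> B \<longrightarrow> k \<le> X x"
    using thresh[OF \<open>A \<in> sets M\<close> \<open>B \<in> sets M\<close> pA pB Xm H] by blast
  then show ?thesis
    unfolding A_def B_def q_def S_def by (intro exI[of _ k] conjI) (auto elim!: eventually_mono)
qed

lemma comonotone_sym: "comonotone M X W \<Longrightarrow> comonotone M W X"
  unfolding comonotone_def by (auto elim!: eventually_mono simp: mult.commute)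

lemma ulam1:
  fixes Y :: "'a \<Rightarrow> real"
  assumes Y: "integrable M Y"
  shows "u_lam M 1 Y = ereal (\<integral>x. Y x \<partial>M)"
proof (rule antisym)
  show "u_lam M 1 Y \<le> ereal (\<integral>x. Y x \<partial>M)" by (rule ulam_le_E[OF _ _ Y]) auto
  show "ereal (\<integral>x. Y x \<partial>M) \<le> u_lam M 1 Y" unfolding u_lam_def
  proof (rule INF_greatest)
    fix Q assume Q: "Q \<in> D_lam M 1"
    note Qp = density_props[OF Q]
    have "(\<integral>x. 1 - Q x \<partial>M) = 0" using Qp(4,5) by (simp add: M.prob_space)
    moreover have "AE x in M. 0 \<le> 1 - Q x" using Qp(3) by (auto elim: eventually_mono)
    moreover have "integrable M (\<lambda>x. 1 - Q x)" using Qp(4) by simp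
    ultimately have "AE x in M. 1 - Q x = 0" using integral_nonneg_eq_0_iff_AE by blast
    then have "AE x in M. Q x * Y x = Y x" by (auto elim: eventually_mono)
    then have "(\<integral>x. Q x * Y x \<partial>M) = (\<integral>x. Y x \<partial>M)"
      using Qp(1) Y by (intro integral_cong_AE) auto
    then show "ereal (\<integral>x. Y x \<partial>M) \<le> expQ M Q Y" using expQ_Dlam[OF Q _ Y] by simp
  qed
qed

lemma npz_opt:
  fixes X W :: "'a \<Rightarrow> real"
  assumes cm: "comonotone M X W" and X: "integrable M X" and W: "integrable M W"
    and l: "0 < l" "l \<le> 1"
  shows "expQ M (npz M (\<lambda>x. X x + W x) l) X = u_lam M l X"
proof -
  have Xm[measurable]: "X \<in> borel_measurable M" using X by auto
  have Wm[measurable]: "W \<in> borel_measurable M" using W by auto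
  have Sm: "(\<lambda>x. X x + W x) \<in> borel_measurable M" by measurable
  have ZD: "npz M (\<lambda>x. X x + W x) l \<in> D_lam M l" by (rule npz_Dlam[OF Sm l])
  show ?thesis
  proof (cases "l < 1")
    case True
    obtain k where k: "AE x in M. X x + W x \<le> qnt M (\<lambda>x. X x + W x) l \<longrightarrow> X x \<le> k"
      "AE x in M. qnt M (\<lambda>x. X x + W x) l \<le> X x + W x \<longrightarrow> k \<le> X x"
      using comon_thresh[OF cm Xm Wm l(1) True] by blast
    show ?thesis using np_min[OF Sm l(1) True X k] expQ_Dlam[OF ZD l(1) X] by simp
  next
    case False
    then have l1: "l = 1" using l by simp
    have "npz M (\<lambda>x. X x + W x) l = (\<lambda>_. 1)" unfolding npz_def l1 by auto
    then show ?thesis using ulam1[OF X] expQ_Dlam[OF one_Dlam[of 1] _ X] l1 by simp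
  qed
qed

end

definition qq :: "'a measure \<Rightarrow> ('a \<Rightarrow> real) \<Rightarrow> real \<Rightarrow> real" where
  "qq M S l = (if 0 < l \<and> l < 1 then qnt M S l else 0)"

definition aa2 :: "'a measure \<Rightarrow> ('a \<Rightarrow> real) \<Rightarrow> real \<Rightarrow> real" where
  "aa2 M S l = (if cdfS M S (qq M S l) - cdfSm M S (qq M S l) = 0 then 0
     else (l - cdfSm M S (qq M S l)) / (cdfS M S (qq M S l) - cdfSm M S (qq M S l)))"

definition FF :: "real measure \<Rightarrow> 'a measure \<Rightarrow> ('a \<Rightarrow> real) \<Rightarrow> 'a \<Rightarrow> ennreal" where
  "FF mu M S x = (\<integral>\<^sup>+ l. ennreal (npz M S l x) \<partial>mu)"

definition mixd :: "real measure \<Rightarrow> 'a measure \<Rightarrow> ('a \<Rightarrow> real) \<Rightarrow> 'a \<Rightarrow> real" where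
  "mixd mu M S x = enn2real (FF mu M S x)"

context wvar
begin

lemma cdfS_meas[measurable]: "S \<in> borel_measurable M \<Longrightarrow> cdfS M S \<in> borel_measurable borel"
  by (rule borel_measurable_mono[OF cdfS_mono])

lemma cdfSm_meas[measurable]: "S \<in> borel_measurable M \<Longrightarrow> cdfSm M S \<in> borel_measurable borel"
  by (rule borel_measurable_mono[OF cdfSm_mono])

lemma qq_meas[measurable]:
  assumes S[measurable]: "S \<in> borel_measurable M"
  shows "qq M S \<in> borel_measurable borel"
proof (subst borel_measurable_iff_le, intro allI)
  fix a :: real
  have "{w \<in> space borel. qq M S w \<le> a} =
      ({0<..<1} \<inter> {w. w \<le> cdfS M S a}) \<union> (if 0 \<le> a then - {0<..<1} else {})"
    using qnt_props(3)[OF S] by (auto simp: qq_def)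
  moreover have "{w::real. w \<le> cdfS M S a} \<in> sets borel" by simp
  ultimately show "{w \<in> space borel. qq M S w \<le> a} \<in> sets borel" by simp
qed

lemma npz_eq:
  "npz M S l x = (if 0 < l \<and> l < 1 then
     (if S x < qq M S l then 1 / l else if S x = qq M S l then aa2 M S l / l else 0) else 1)"
  unfolding npz_def aa_def aa2_def qq_def by simp

lemma npz_meas1[measurable]:
  assumes S[measurable]: "S \<in> borel_measurable M"
  shows "(\<lambda>p. npz M S (fst p) (snd p)) \<in> borel_measurable (mu \<Otimes>\<^sub>M M)"
  unfolding npz_eq aa2_def by measurable

lemma npz_meas2[measurable]:
  assumes S[measurable]: "S \<in> borel_measurable M"
  shows "(\<lambda>p. npz M S (snd p) (fst p)) \<in> borel_measurable (M \<Otimes>\<^sub>M mu)"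
  unfolding npz_eq aa2_def by measurable

lemma npz_meas_l[measurable]:
  assumes S[measurable]: "S \<in> borel_measurable M"
  shows "(\<lambda>l. npz M S l x) \<in> borel_measurable borel"
  unfolding npz_eq aa2_def by measurable

lemma npz_nn: "S \<in> borel_measurable M \<Longrightarrow> 0 \<le> npz M S l x"
  unfolding npz_def using aa_bounds(1)[of S l] by (auto intro!: divide_nonneg_pos)

lemma npz_int_all:
  assumes S[measurable]: "S \<in> borel_measurable M"
  shows "(\<integral>\<^sup>+ x. ennreal (npz M S l x) \<partial>M) = 1"
proof (cases "0 < l \<and> l \<le> 1")
  case True
  then show ?thesis using npz_Dlam[OF S, of l] unfolding D_lam_def is_density_def by auto
next
  case False
  then have "npz M S l x = 1" for x unfolding npz_def by auto
  then show ?thesis by (simp add: M.emeasure_space_1)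
qed

lemma pair_sf: "pair_sigma_finite mu M"
  unfolding pair_sigma_finite_def using mu.sigma_finite_measure_axioms M.sigma_finite_measure_axioms by simp

lemma fubini_mix:
  assumes f[measurable]: "(\<lambda>p. f (fst p) (snd p)) \<in> borel_measurable (mu \<Otimes>\<^sub>M M)"
  shows "(\<integral>\<^sup>+ x. (\<integral>\<^sup>+ l. f l x \<partial>mu) \<partial>M) = (\<integral>\<^sup>+ l. (\<integral>\<^sup>+ x. f l x \<partial>M) \<partial>mu)"
proof -
  interpret P: pair_sigma_finite mu M by (rule pair_sf)
  have "case_prod f \<in> borel_measurable (mu \<Otimes>\<^sub>M M)" using f by (simp add: case_prod_beta')
  then show ?thesis by (rule P.Fubini')
qed

lemma FF_meas[measurable]:
  assumes S[measurable]: "S \<in> borel_measurable M"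
  shows "FF mu M S \<in> borel_measurable M"
proof -
  have "case_prod (\<lambda>x l. ennreal (npz M S l x)) \<in> borel_measurable (M \<Otimes>\<^sub>M mu)"
    using npz_meas2[OF S] by (simp add: case_prod_beta')
  then show ?thesis unfolding FF_def by (rule mu.borel_measurable_nn_integral)
qed

lemma FF_int:
  assumes S[measurable]: "S \<in> borel_measurable M"
  shows "(\<integral>\<^sup>+ x. FF mu M S x \<partial>M) = 1"
proof -
  have "(\<integral>\<^sup>+ x. FF mu M S x \<partial>M) = (\<integral>\<^sup>+ l. (\<integral>\<^sup>+ x. ennreal (npz M S l x) \<partial>M) \<partial>mu)"
    unfolding FF_def by (rule fubini_mix) measurable
  also have "\<dots> = 1" using npz_int_all[OF S] by (simp add: mu.emeasure_space_1)
  finally show ?thesis .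
qed

lemma FF_fin:
  assumes S[measurable]: "S \<in> borel_measurable M"
  shows "AE x in M. FF mu M S x \<noteq> \<infinity>"
  by (rule nn_integral_PInf_AE) (auto simp: FF_int[OF S])

lemma mixd_meas[measurable]:
  "S \<in> borel_measurable M \<Longrightarrow> mixd mu M S \<in> borel_measurable M"
  unfolding mixd_def by measurable

lemma mixd_density:
  assumes S[measurable]: "S \<in> borel_measurable M"
  shows "is_density M (mixd mu M S)"
proof -
  have "(\<integral>\<^sup>+ x. ennreal (mixd mu M S x) \<partial>M) = (\<integral>\<^sup>+ x. FF mu M S x \<partial>M)"
    using FF_fin[OF S] by (intro nn_integral_cong_AE) (auto simp: mixd_def less_top elim!: eventually_mono)
  then show ?thesis unfolding is_density_def using FF_int[OF S] by (auto simp: mixd_def)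
qed

lemma mix_part:
  fixes Y :: "'a \<Rightarrow> real"
  assumes S[measurable]: "S \<in> borel_measurable M" and Y[measurable]: "Y \<in> borel_measurable M"
  shows "(\<integral>\<^sup>+ x. ennreal (mixd mu M S x * Y x) \<partial>M)
       = (\<integral>\<^sup>+ l. (\<integral>\<^sup>+ x. ennreal (npz M S l x * Y x) \<partial>M) \<partial>mu)"
proof -
  have "(\<integral>\<^sup>+ x. ennreal (mixd mu M S x * Y x) \<partial>M) = (\<integral>\<^sup>+ x. (\<integral>\<^sup>+ l. ennreal (npz M S l x * Y x) \<partial>mu) \<partial>M)"
  proof (rule nn_integral_cong_AE)
    show "AE x in M. ennreal (mixd mu M S x * Y x) = (\<integral>\<^sup>+ l. ennreal (npz M S l x * Y x) \<partial>mu)"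
      using FF_fin[OF S]
    proof eventually_elim
      case (elim x)
      show ?case
      proof (cases "0 \<le> Y x")
        case True
        have "ennreal (mixd mu M S x * Y x) = ennreal (mixd mu M S x) * ennreal (Y x)"
          using True by (simp add: ennreal_mult mixd_def)
        also have "ennreal (mixd mu M S x) = FF mu M S x" using elim by (simp add: mixd_def less_top)
        also have "FF mu M S x * ennreal (Y x) = (\<integral>\<^sup>+ l. ennreal (npz M S l x) * ennreal (Y x) \<partial>mu)"
          unfolding FF_def by (rule nn_integral_multc[symmetric]) measurable
        also have "\<dots> = (\<integral>\<^sup>+ l. ennreal (npz M S l x * Y x) \<partial>mu)"
          using True npz_nn[OF S] by (intro nn_integral_cong) (simp add: ennreal_mult)
        finally show ?thesis .
      next
        case False
        have "mixd mu M S x * Y x \<le> 0" using False by (simp add: mixd_def mult_nonneg_nonpos)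
        moreover have "npz M S l x * Y x \<le> 0" for l using False npz_nn[OF S, of l x] by (simp add: mult_nonneg_nonpos)
        ultimately show ?thesis by (simp add: ennreal_neg)
      qed
    qed
  qed
  also have "\<dots> = (\<integral>\<^sup>+ l. (\<integral>\<^sup>+ x. ennreal (npz M S l x * Y x) \<partial>M) \<partial>mu)"
    by (rule fubini_mix) measurable
  finally show ?thesis .
qed

end

lemma e2_max0: "e2ennreal (max e 0) = e2ennreal e"
  by (cases "0 \<le> e") (auto simp: max_def e2ennreal_neg)

lemma ext_int_diff:
  fixes p n :: "'b \<Rightarrow> ennreal"
  assumes [measurable]: "p \<in> borel_measurable N" "n \<in> borel_measurable N"
    and fin: "(\<integral>\<^sup>+ x. n x \<partial>N) \<noteq> \<infinity>"
  shows "ext_int N (\<lambda>x. enn2ereal (p x) - enn2ereal (n x))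
       = enn2ereal (\<integral>\<^sup>+ x. p x \<partial>N) - enn2ereal (\<integral>\<^sup>+ x. n x \<partial>N)"
proof -
  have aen: "AE x in N. n x \<noteq> \<infinity>" by (rule nn_integral_PInf_AE) (simp, use fin in blast)
  have negeq: "- (enn2ereal a - enn2ereal b) = enn2ereal b - enn2ereal a" if nb: "b \<noteq> \<infinity>" for a b :: ennreal
  proof -
    obtain r where r: "b = ennreal r" "0 \<le> r" using nb by (cases b) auto
    show ?thesis unfolding r using r(2) by (cases "enn2ereal a") auto
  qed
  define Pp where "Pp = (\<integral>\<^sup>+ x. p x - n x \<partial>N)"
  define Nn where "Nn = (\<integral>\<^sup>+ x. n x - p x \<partial>N)"
  have P1: "(\<integral>\<^sup>+ x. e2ennreal (max (enn2ereal (p x) - enn2ereal (n x)) 0) \<partial>N) = Pp"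
    unfolding Pp_def by (simp add: e2_max0)
  have N1: "(\<integral>\<^sup>+ x. e2ennreal (max (- (enn2ereal (p x) - enn2ereal (n x))) 0) \<partial>N) = Nn"
    unfolding Nn_def using aen by (intro nn_integral_cong_AE) (auto elim!: eventually_mono simp: e2_max0 negeq)
  have Nnfin: "Nn \<noteq> \<infinity>"
  proof -
    have "Nn \<le> (\<integral>\<^sup>+ x. n x \<partial>N)" unfolding Nn_def by (intro nn_integral_mono) simp
    then show ?thesis using fin by (auto simp: top_unique)
  qed
  have "(\<integral>\<^sup>+ x. (p x - n x) + n x \<partial>N) = (\<integral>\<^sup>+ x. p x + (n x - p x) \<partial>N)"
  proof (rule nn_integral_cong_AE)
    show "AE x in N. p x - n x + n x = p x + (n x - p x)"
      using aen
    proof eventually_elim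
      case (elim x)
      show ?case
      proof (cases "n x \<le> p x")
        case True
        have "n x - p x = 0" using True elim by (simp add: diff_eq_0_iff_ennreal less_top)
        then show ?thesis using True by (simp add: diff_add_cancel_ennreal)
      next
        case False
        then have pn: "p x \<le> n x" by simp
        then have "p x < top" using elim by (simp add: le_less_trans less_top)
        then have "p x - n x = 0" using pn by (simp add: diff_eq_0_iff_ennreal)
        then show ?thesis using pn by (simp add: add_diff_inverse_ennreal)
      qed
    qed
  qed
  then have eq: "Pp + (\<integral>\<^sup>+ x. n x \<partial>N) = (\<integral>\<^sup>+ x. p x \<partial>N) + Nn"
    unfolding Pp_def Nn_def by (simp add: nn_integral_add)
  have lhs: "ext_int N (\<lambda>x. enn2ereal (p x) - enn2ereal (n x)) = enn2ereal Pp - enn2ereal Nn"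
    unfolding ext_int_def Let_def P1 N1 using Nnfin by simp
  obtain a where a: "(\<integral>\<^sup>+ x. n x \<partial>N) = ennreal a" "0 \<le> a" using fin by (cases "(\<integral>\<^sup>+ x. n x \<partial>N)") (auto simp: infinity_ennreal_def)
  obtain b where b: "Nn = ennreal b" "0 \<le> b" using Nnfin by (cases Nn) (auto simp: infinity_ennreal_def)
  show ?thesis
  proof (cases "(\<integral>\<^sup>+ x. p x \<partial>N) = \<infinity>")
    case True
    then have "Pp = \<infinity>" using eq a by (auto simp: ennreal_add_eq_top)
    then show ?thesis unfolding lhs using True a b by simp
  next
    case False
    then obtain c where c: "(\<integral>\<^sup>+ x. p x \<partial>N) = ennreal c" "0 \<le> c" by (cases "(\<integral>\<^sup>+ x. p x \<partial>N)") auto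
    have "Pp \<noteq> \<infinity>"
    proof
      assume "Pp = \<infinity>"
      then have "top = ennreal c + ennreal b" using eq unfolding a b c by simp
      also have "\<dots> = ennreal (c + b)" using b(2) c(2) by (simp add: ennreal_plus)
      finally show False by simp
    qed
    then obtain d where d: "Pp = ennreal d" "0 \<le> d" by (cases Pp) (auto simp: infinity_ennreal_def)
    have "d + a = c + b" using eq unfolding a b c d using a(2) b(2) c(2) d(2)
      by (simp flip: ennreal_plus)
    then show ?thesis unfolding lhs a b c d using a(2) b(2) c(2) d(2) by simp
  qed
qed

context wvar
begin

lemma negpart_bound:
  fixes Y :: "'a \<Rightarrow> real"
  assumes l: "0 < l" and Ym[measurable]: "Y \<in> borel_measurable M"
    and p0: "l < measure M {x\<in>space M. Y x < 0}"
    and Z: "Z \<in> D_lam M l" and Zb: "\<And>x. x \<in> space M \<Longrightarrow> Z x \<le> 1 / l"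
  shows "u_lam M l Y \<le> - enn2ereal (\<integral>\<^sup>+ x. ennreal (- (Z x * Y x)) \<partial>M)"
proof -
  note Zp = density_props[OF Z]
  have Zm[measurable]: "Z \<in> borel_measurable M" by (rule Zp(1))
  define N where "N = {x\<in>space M. Y x < 0}"
  have Ns[measurable]: "N \<in> sets M" unfolding N_def by measurable
  define pN where "pN = measure M N"
  have iN: "integrable M (indicator N :: 'a \<Rightarrow> real)"
    by (rule integrable_real_indicator) (auto simp: M.emeasure_le_1 less_top[symmetric])
  have iZN: "integrable M (\<lambda>x. Z x * indicator N x)"
    by (rule bdd_mult_integrable[OF Zm _ iN, where B="1/l"]) (use Zp(2) Zb in auto)
  define m where "m = (\<integral>x. Z x * indicator N x \<partial>M)"
  have m0: "0 \<le> m" unfolding m_def using Zp(2) by (intro integral_nonneg_AE AE_I2) (auto simp: indicator_def)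
  have m1: "m \<le> 1"
  proof -
    have "m \<le> integral\<^sup>L M Z" unfolding m_def
      using iZN Zp(4) Zp(2) by (intro integral_mono) (auto simp: indicator_def)
    then show ?thesis using Zp(5) by simp
  qed
  have pNl: "1 < pN / l" using p0 l unfolding pN_def N_def by (simp add: field_simps)
  define d where "d = pN / l - m"
  have d: "0 < d" unfolding d_def using pNl m1 by simp
  define \<theta> where "\<theta> = (1 - m) / d"
  have th: "0 \<le> \<theta>" "\<theta> \<le> 1" unfolding \<theta>_def d_def using m1 pNl d[unfolded d_def] by (auto simp: field_simps)
  define Q where "Q x = (Z x + \<theta> * (1/l - Z x)) * indicator N x" for x
  have Qm[measurable]: "Q \<in> borel_measurable M" unfolding Q_def by measurable
  have Qb: "0 \<le> Q x \<and> Q x \<le> 1/l" "Z x * indicator N x \<le> Q x" if x: "x \<in> space M" for x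
  proof -
    have a: "0 \<le> 1/l - Z x" using Zb[OF x] by simp
    have "\<theta> * (1/l - Z x) \<le> 1 * (1/l - Z x)" using th a by (intro mult_right_mono) auto
    moreover have "0 \<le> \<theta> * (1/l - Z x)" using th a by simp
    ultimately show "0 \<le> Q x \<and> Q x \<le> 1/l" "Z x * indicator N x \<le> Q x"
      unfolding Q_def using Zp(2)[OF x] l by (auto simp: indicator_def)
  qed
  have iQ: "integrable M Q"
    by (rule M.integrable_const_bound[where B="1/l"]) (use Qb in auto)
  have "integral\<^sup>L M Q = (\<integral>x. (1 - \<theta>) * (Z x * indicator N x) + (\<theta> / l) * indicator N x \<partial>M)"
    unfolding Q_def by (rule Bochner_Integration.integral_cong) (auto simp: algebra_simps)
  also have "\<dots> = (1 - \<theta>) * m + (\<theta> / l) * pN"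
    using iZN iN sets.sets_into_space[OF Ns] by (simp add: m_def pN_def Int_absorb2)
  also have "\<dots> = m + \<theta> * d" unfolding d_def by (simp add: algebra_simps)
  also have "\<dots> = 1" unfolding \<theta>_def using d by simp
  finally have intQ: "integral\<^sup>L M Q = 1" .
  have "(\<integral>\<^sup>+ x. ennreal (Q x) \<partial>M) = ennreal (integral\<^sup>L M Q)"
    by (rule nn_integral_eq_integral[OF iQ]) (use Qb in \<open>auto intro!: AE_I2\<close>)
  then have "is_density M Q" unfolding is_density_def using intQ Qb by auto
  moreover have "AE x in M. Q x \<le> 1 / l" using Qb by (auto intro!: AE_I2)
  ultimately have QD: "Q \<in> D_lam M l" unfolding D_lam_def by blast
  have pos0: "(\<integral>\<^sup>+ x. ennreal (Q x * Y x) \<partial>M) = 0"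
  proof -
    have "(\<integral>\<^sup>+ x. ennreal (Q x * Y x) \<partial>M) = (\<integral>\<^sup>+ x. 0 \<partial>M)"
    proof (rule nn_integral_cong)
      fix x assume x: "x \<in> space M"
      have "Q x * Y x \<le> 0"
      proof (cases "x \<in> N")
        case True
        then have "Y x < 0" unfolding N_def by auto
        then show ?thesis using Qb(1)[OF x] by (simp add: mult_nonneg_nonpos)
      next
        case False
        then show ?thesis unfolding Q_def by simp
      qed
      then show "ennreal (Q x * Y x) = 0" by (simp add: ennreal_neg)
    qed
    then show ?thesis by simp
  qed
  have negge: "(\<integral>\<^sup>+ x. ennreal (- (Z x * Y x)) \<partial>M) \<le> (\<integral>\<^sup>+ x. ennreal (- (Q x * Y x)) \<partial>M)"
  proof (rule nn_integral_mono)
    fix x assume x: "x \<in> space M"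
    show "ennreal (- (Z x * Y x)) \<le> ennreal (- (Q x * Y x))"
    proof (cases "x \<in> N")
      case True
      then have "Y x < 0" unfolding N_def by auto
      moreover have "Z x \<le> Q x" using Qb(2)[OF x] True by simp
      ultimately have "- (Z x * Y x) \<le> - (Q x * Y x)" by (simp add: mult_right_mono_neg)
      then show ?thesis by (rule ennreal_leI)
    next
      case False
      then have "0 \<le> Y x" unfolding N_def using x by auto
      then have "- (Z x * Y x) \<le> 0" using Zp(2)[OF x] by simp
      then show ?thesis by (simp add: ennreal_neg)
    qed
  qed
  have "u_lam M l Y \<le> expQ M Q Y" unfolding u_lam_def by (rule INF_lower[OF QD])
  also have "expQ M Q Y \<le> - enn2ereal (\<integral>\<^sup>+ x. ennreal (- (Q x * Y x)) \<partial>M)"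
    unfolding expQ_def ext_int_real pos0 by (simp add: zero_ennreal.rep_eq)
  also have "\<dots> \<le> - enn2ereal (\<integral>\<^sup>+ x. ennreal (- (Z x * Y x)) \<partial>M)"
    using negge by (simp add: less_eq_ennreal.rep_eq[symmetric])
  finally show ?thesis .
qed

end

context wvar
begin

lemma pn_meas:
  fixes Y :: "'a \<Rightarrow> real"
  assumes S[measurable]: "S \<in> borel_measurable M" and Y[measurable]: "Y \<in> borel_measurable M"
  shows "(\<lambda>l. \<integral>\<^sup>+ x. ennreal (npz M S l x * Y x) \<partial>M) \<in> borel_measurable mu"
proof -
  have "(\<lambda>p. ennreal (npz M S (fst p) (snd p) * Y (snd p))) \<in> borel_measurable (mu \<Otimes>\<^sub>M M)" by measurable
  then have "case_prod (\<lambda>l x. ennreal (npz M S l x * Y x)) \<in> borel_measurable (mu \<Otimes>\<^sub>M M)"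
    by (simp add: case_prod_beta')
  then show ?thesis by (rule M.borel_measurable_nn_integral)
qed

lemma mix_Dmu:
  assumes S[measurable]: "S \<in> borel_measurable M"
  shows "mixd mu M S \<in> D_mu M mu"
proof -
  let ?Z = "mixd mu M S"
  have dens: "is_density M ?Z" by (rule mixd_density[OF S])
  have main: "u_mu M mu Y \<le> expQ M ?Z Y" if Y[measurable]: "Y \<in> borel_measurable M" for Y :: "'a \<Rightarrow> real"
  proof -
    define p where "p l = (\<integral>\<^sup>+ x. ennreal (npz M S l x * Y x) \<partial>M)" for l
    define n where "n l = (\<integral>\<^sup>+ x. ennreal (npz M S l x * (- Y x)) \<partial>M)" for l
    have pm[measurable]: "p \<in> borel_measurable mu" unfolding p_def by (rule pn_meas[OF S Y])
    have nm[measurable]: "n \<in> borel_measurable mu" unfolding n_def by (rule pn_meas[OF S]) measurable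
    have Pm: "(\<integral>\<^sup>+ x. ennreal (?Z x * Y x) \<partial>M) = (\<integral>\<^sup>+ l. p l \<partial>mu)"
      unfolding p_def by (rule mix_part[OF S Y])
    have Nm: "(\<integral>\<^sup>+ x. ennreal (- (?Z x * Y x)) \<partial>M) = (\<integral>\<^sup>+ l. n l \<partial>mu)"
      using mix_part[OF S, of "\<lambda>x. - Y x"] unfolding n_def by simp
    have eQ: "expQ M ?Z Y = (if (\<integral>\<^sup>+ l. n l \<partial>mu) = \<infinity> then -\<infinity>
        else enn2ereal (\<integral>\<^sup>+ l. p l \<partial>mu) - enn2ereal (\<integral>\<^sup>+ l. n l \<partial>mu))"
      unfolding expQ_def ext_int_real Pm Nm ..
    have el: "u_lam M l Y \<le> (if n l = \<infinity> then -\<infinity> else enn2ereal (p l) - enn2ereal (n l))"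
      if l: "0 < l" "l \<le> 1" for l
    proof -
      have "u_lam M l Y \<le> expQ M (npz M S l) Y" unfolding u_lam_def by (rule INF_lower[OF npz_Dlam[OF S l]])
      also have "expQ M (npz M S l) Y = (if n l = \<infinity> then -\<infinity> else enn2ereal (p l) - enn2ereal (n l))"
        unfolding expQ_def ext_int_real p_def n_def by simp
      finally show ?thesis .
    qed
    show ?thesis
    proof (cases "(\<integral>\<^sup>+ l. n l \<partial>mu) = \<infinity>")
      case False
      have aen: "AE l in mu. n l \<noteq> \<infinity>" by (rule nn_integral_PInf_AE) (simp, use False in blast)
      have "AE l in mu. u_lam M l Y \<le> enn2ereal (p l) - enn2ereal (n l)"
        using AE_mu01 aen
      proof eventually_elim
        case (elim l)
        then show ?case using el[of l] by simp
      qed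
      then have "u_mu M mu Y \<le> ext_int mu (\<lambda>l. enn2ereal (p l) - enn2ereal (n l))"
        unfolding u_mu_def by (rule ext_int_mono_AE)
      also have "\<dots> = enn2ereal (\<integral>\<^sup>+ l. p l \<partial>mu) - enn2ereal (\<integral>\<^sup>+ l. n l \<partial>mu)"
        by (rule ext_int_diff[OF pm nm False])
      finally show ?thesis unfolding eQ using False by simp
    next
      case True
      define U where "U l = e2ennreal (max (- u_lam M l Y) 0)" for l
      have goal: "(\<integral>\<^sup>+ l. U l \<partial>mu) = \<infinity>"
      proof (cases "(\<integral>\<^sup>+ x. ennreal (- Y x) \<partial>M) = \<infinity>")
        case True
        have "AE l in mu. U l = \<infinity>"
          using AE_mu01
        proof eventually_elim
          case (elim l)
          have "u_lam M l Y \<le> expQ M (\<lambda>_. 1) Y" unfolding u_lam_def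
            by (rule INF_lower[OF one_Dlam]) (use elim in auto)
          also have "\<dots> = -\<infinity>" unfolding expQ_def ext_int_real using True by simp
          finally show ?case unfolding U_def by simp
        qed
        then have "(\<integral>\<^sup>+ l. U l \<partial>mu) = (\<integral>\<^sup>+ l. \<infinity> \<partial>mu)" by (rule nn_integral_cong_AE)
        then show ?thesis by (simp add: mu.emeasure_space_1)
      next
        case KY: False
        define p0 where "p0 = measure M {x\<in>space M. Y x < 0}"
        have p0pos: "0 < p0"
        proof (rule ccontr)
          assume "\<not> 0 < p0"
          then have "p0 = 0" unfolding p0_def using measure_nonneg[of M] by (meson antisym not_less)
          then have "AE x in M. \<not> Y x < 0" unfolding p0_def by (subst (asm) M.prob_Collect_eq_0) auto
          then have "n l = 0" for l
          proof -
            assume ae: "AE x in M. \<not> Y x < 0"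
            have "n l = (\<integral>\<^sup>+ x. 0 \<partial>M)" unfolding n_def
              using ae by (intro nn_integral_cong_AE) (auto elim!: eventually_mono simp: ennreal_neg mult_nonneg_nonpos npz_nn[OF S])
            then show ?thesis by simp
          qed
          then show False using True by simp
        qed
        have p01: "p0 \<le> 1" unfolding p0_def by simp
        define KYr where "KYr = (\<integral>\<^sup>+ x. ennreal (- Y x) \<partial>M)"
        define n1 where "n1 l = n l * indicator {0<..<p0} l" for l
        define n2 where "n2 l = n l * indicator (- {0<..<p0}) l" for l
        have [measurable]: "n1 \<in> borel_measurable mu" "n2 \<in> borel_measurable mu"
          unfolding n1_def n2_def by measurable
        have "(\<integral>\<^sup>+ l. n l \<partial>mu) = (\<integral>\<^sup>+ l. n1 l + n2 l \<partial>mu)"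
          by (intro nn_integral_cong) (auto simp: n1_def n2_def indicator_def)
        also have "\<dots> = (\<integral>\<^sup>+ l. n1 l \<partial>mu) + (\<integral>\<^sup>+ l. n2 l \<partial>mu)" by (rule nn_integral_add) auto
        finally have split: "(\<integral>\<^sup>+ l. n l \<partial>mu) = (\<integral>\<^sup>+ l. n1 l \<partial>mu) + (\<integral>\<^sup>+ l. n2 l \<partial>mu)" .
        have n2b: "(\<integral>\<^sup>+ l. n2 l \<partial>mu) \<le> (\<integral>\<^sup>+ l. ennreal (1/p0) * KYr \<partial>mu)"
        proof (rule nn_integral_mono_AE)
          show "AE l in mu. n2 l \<le> ennreal (1/p0) * KYr"
            using AE_mu01
          proof eventually_elim
            case (elim l)
            show ?case
            proof (cases "l \<in> {0<..<p0}")
              case True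
              then show ?thesis by (simp add: n2_def)
            next
              case False
              then have lp: "p0 \<le> l" using elim by auto
              have "n l \<le> (\<integral>\<^sup>+ x. ennreal (1/p0) * ennreal (- Y x) \<partial>M)" unfolding n_def
              proof (rule nn_integral_mono)
                fix x assume x: "x \<in> space M"
                have z1: "npz M S l x \<le> 1/l" using npz_bounds(2)[OF S, of l x] elim by simp
                have "1/l \<le> 1/p0" using lp p0pos by (intro divide_left_mono) auto
                then have zb: "npz M S l x \<le> 1/p0" using z1 by linarith
                show "ennreal (npz M S l x * - Y x) \<le> ennreal (1 / p0) * ennreal (- Y x)"
                proof (cases "0 \<le> - Y x")
                  case True
                  then have "npz M S l x * - Y x \<le> (1/p0) * - Y x" using zb by (intro mult_right_mono) auto
                  then have "ennreal (npz M S l x * - Y x) \<le> ennreal ((1/p0) * - Y x)" by (rule ennreal_leI)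
                  also have "ennreal ((1/p0) * - Y x) = ennreal (1/p0) * ennreal (- Y x)"
                    using True p0pos by (intro ennreal_mult) auto
                  finally show ?thesis .
                next
                  case False
                  then have "npz M S l x * - Y x \<le> 0" using npz_nn[OF S, of l x] by (simp add: mult_nonneg_nonpos)
                  then show ?thesis by (simp add: ennreal_neg)
                qed
              qed
              also have "\<dots> = ennreal (1/p0) * KYr" unfolding KYr_def by (rule nn_integral_cmult) measurable
              finally show ?thesis using False by (simp add: n2_def)
            qed
          qed
        qed
        also have "\<dots> = ennreal (1/p0) * KYr" by (simp add: mu.emeasure_space_1)
        also have "\<dots> < \<infinity>" using KY unfolding KYr_def by (simp add: ennreal_mult_less_top less_top)
        finally have n2f: "(\<integral>\<^sup>+ l. n2 l \<partial>mu) \<noteq> \<infinity>" by simp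
        have n1inf: "(\<integral>\<^sup>+ l. n1 l \<partial>mu) = \<infinity>" using True n2f unfolding split by (auto simp: ennreal_add_eq_top)
        have "(\<integral>\<^sup>+ l. n1 l \<partial>mu) \<le> (\<integral>\<^sup>+ l. U l \<partial>mu)"
        proof (rule nn_integral_mono_AE)
          show "AE l in mu. n1 l \<le> U l"
            using AE_mu01
          proof eventually_elim
            case (elim l)
            show ?case
            proof (cases "l \<in> {0<..<p0}")
              case False
              then show ?thesis by (simp add: n1_def)
            next
              case True
              then have l: "0 < l" "l < p0" by auto
              have ZD: "npz M S l \<in> D_lam M l" using npz_Dlam[OF S] elim by auto
              have lm: "l < measure M {x\<in>space M. Y x < 0}" using l(2) unfolding p0_def .
              have zb: "\<And>x. x \<in> space M \<Longrightarrow> npz M S l x \<le> 1 / l"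
                using npz_bounds(2)[OF S l(1)] elim by blast
              have hb: "u_lam M l Y \<le> - enn2ereal (\<integral>\<^sup>+ x. ennreal (- (npz M S l x * Y x)) \<partial>M)"
                by (rule negpart_bound[OF l(1) Y lm ZD zb])
              have nn: "n l = (\<integral>\<^sup>+ x. ennreal (- (npz M S l x * Y x)) \<partial>M)" unfolding n_def by simp
              have "enn2ereal (n l) \<le> - u_lam M l Y"
                using hb unfolding nn[symmetric] by (metis ereal_minus_le_minus ereal_uminus_uminus)
              then have "e2ennreal (enn2ereal (n l)) \<le> e2ennreal (max (- u_lam M l Y) 0)"
                unfolding e2_max0 by (rule e2ennreal_mono)
              then show ?thesis using True by (simp add: n1_def U_def)
            qed
          qed
        qed
        then show ?thesis using n1inf by (simp add: top_unique)
      qed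
      have "u_mu M mu Y = -\<infinity>" unfolding u_mu_def ext_int_def Let_def using goal by (simp add: U_def)
      then show ?thesis by simp
    qed
  qed
  show ?thesis unfolding D_mu_def using dens main by blast
qed

end

context wvar
begin

lemma mix_eval:
  fixes Y :: "'a \<Rightarrow> real"
  assumes S[measurable]: "S \<in> borel_measurable M" and Yi: "integrable M Y"
    and hyp: "\<And>l. 0 < l \<Longrightarrow> l \<le> 1 \<Longrightarrow> expQ M (npz M S l) Y = u_lam M l Y"
    and fin: "(\<integral>\<^sup>+ x. ennreal (mixd mu M S x * \<bar>Y x\<bar>) \<partial>M) \<le> ennreal C"
  shows "expQ M (mixd mu M S) Y = u_mu M mu Y"
proof -
  have Y[measurable]: "Y \<in> borel_measurable M" using Yi by auto
  let ?Z = "mixd mu M S"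
  have Znn: "0 \<le> ?Z x" for x by (simp add: mixd_def)
  define p where "p l = (\<integral>\<^sup>+ x. ennreal (npz M S l x * Y x) \<partial>M)" for l
  define n where "n l = (\<integral>\<^sup>+ x. ennreal (npz M S l x * (- Y x)) \<partial>M)" for l
  have pm[measurable]: "p \<in> borel_measurable mu" unfolding p_def by (rule pn_meas[OF S Y])
  have nm[measurable]: "n \<in> borel_measurable mu" unfolding n_def by (rule pn_meas[OF S]) measurable
  have Pm: "(\<integral>\<^sup>+ x. ennreal (?Z x * Y x) \<partial>M) = (\<integral>\<^sup>+ l. p l \<partial>mu)"
    unfolding p_def by (rule mix_part[OF S Y])
  have Nm: "(\<integral>\<^sup>+ x. ennreal (- (?Z x * Y x)) \<partial>M) = (\<integral>\<^sup>+ l. n l \<partial>mu)"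
    using mix_part[OF S, of "\<lambda>x. - Y x"] unfolding n_def by simp
  have "(\<integral>\<^sup>+ x. ennreal (- (?Z x * Y x)) \<partial>M) \<le> (\<integral>\<^sup>+ x. ennreal (?Z x * \<bar>Y x\<bar>) \<partial>M)"
  proof (intro nn_integral_mono ennreal_leI)
    fix x
    show "- (?Z x * Y x) \<le> ?Z x * \<bar>Y x\<bar>"
      using mult_left_mono[of "- Y x" "\<bar>Y x\<bar>" "?Z x"] Znn[of x] by simp
  qed
  also have "\<dots> < \<infinity>" using fin by (simp add: le_less_trans[OF _ ennreal_less_top])
  finally have Nfin: "(\<integral>\<^sup>+ l. n l \<partial>mu) \<noteq> \<infinity>" unfolding Nm by simp
  have aen: "AE l in mu. n l \<noteq> \<infinity>" by (rule nn_integral_PInf_AE) (simp, use Nfin in blast)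
  have "expQ M ?Z Y = enn2ereal (\<integral>\<^sup>+ l. p l \<partial>mu) - enn2ereal (\<integral>\<^sup>+ l. n l \<partial>mu)"
    unfolding expQ_def ext_int_real Pm Nm using Nfin by simp
  also have "\<dots> = ext_int mu (\<lambda>l. enn2ereal (p l) - enn2ereal (n l))"
    by (rule ext_int_diff[OF pm nm Nfin, symmetric])
  also have "\<dots> = ext_int mu (\<lambda>l. u_lam M l Y)"
  proof (rule ext_int_cong_AE)
    show "AE l in mu. enn2ereal (p l) - enn2ereal (n l) = u_lam M l Y"
      using AE_mu01 aen
    proof eventually_elim
      case (elim l)
      have "u_lam M l Y = expQ M (npz M S l) Y" using hyp elim by simp
      also have "\<dots> = (if n l = \<infinity> then -\<infinity> else enn2ereal (p l) - enn2ereal (n l))"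
        unfolding expQ_def ext_int_real p_def n_def by simp
      finally show ?case using elim by simp
    qed
  qed
  finally show ?thesis unfolding u_mu_def .
qed

lemma backward:
  fixes X W :: "'a \<Rightarrow> real"
  assumes cm: "comonotone M X W" and X: "integrable M X" and W: "integrable M W"
    and bX: "\<forall>Z\<in>D_mu M mu. (\<integral>\<^sup>+x. ennreal (Z x * \<bar>X x\<bar>) \<partial>M) \<le> ennreal CX" and CX: "0 \<le> CX"
    and bW: "\<forall>Z\<in>D_mu M mu. (\<integral>\<^sup>+x. ennreal (Z x * \<bar>W x\<bar>) \<partial>M) \<le> ennreal CW" and CW: "0 \<le> CW"
  shows "u_contrib M mu X W = u_mu M mu X"
proof -
  have Xm[measurable]: "X \<in> borel_measurable M" using X by auto
  have Wm[measurable]: "W \<in> borel_measurable M" using W by auto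
  define S where "S x = X x + W x" for x
  have Sm[measurable]: "S \<in> borel_measurable M" unfolding S_def by measurable
  define Z where "Z = mixd mu M S"
  have ZD: "Z \<in> D_mu M mu" unfolding Z_def by (rule mix_Dmu[OF Sm])
  have Zd: "is_density M Z" using ZD unfolding D_mu_def by blast
  have hX: "expQ M (npz M S l) X = u_lam M l X" if "0 < l" "l \<le> 1" for l
    unfolding S_def by (rule npz_opt[OF cm X W that])
  have S': "S = (\<lambda>x. W x + X x)" unfolding S_def by (auto simp: add.commute)
  have hW: "expQ M (npz M S l) W = u_lam M l W" if "0 < l" "l \<le> 1" for l
    unfolding S' by (rule npz_opt[OF comonotone_sym[OF cm] W X that])
  have eX: "expQ M Z X = u_mu M mu X" unfolding Z_def
    by (rule mix_eval[OF Sm X hX]) (use bX ZD in \<open>auto simp: Z_def\<close>)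
  have eW: "expQ M Z W = u_mu M mu W" unfolding Z_def
    by (rule mix_eval[OF Sm W hW]) (use bW ZD in \<open>auto simp: Z_def\<close>)
  have "expQ M Z W = ereal (\<integral>x. Z x * W x \<partial>M)" using Dmu_int(2)[OF Zd _ CW Wm] bW ZD by blast
  then have ZE: "Z \<in> extreme_mu M mu W" unfolding extreme_mu_def using ZD eW by auto
  show ?thesis
  proof (rule antisym)
    show "u_contrib M mu X W \<le> u_mu M mu X" unfolding u_contrib_def
      using INF_lower[OF ZE, of "\<lambda>Q. expQ M Q X"] eX by simp
    show "u_mu M mu X \<le> u_contrib M mu X W" unfolding u_contrib_def
    proof (rule INF_greatest)
      fix Q assume "Q \<in> extreme_mu M mu W"
      then have "Q \<in> D_mu M mu" unfolding extreme_mu_def by blast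
      then show "u_mu M mu X \<le> expQ M Q X" unfolding D_mu_def using Xm by blast
    qed
  qed
qed

end

theorem proposition5p10:
  fixes M :: "'a measure" and mu :: "real measure" and X W :: "'a \<Rightarrow> real"
  assumes "prob_space M"
    and "prob_space mu" and "sets mu = sets borel" and "emeasure mu {0<..1} = 1"
    and "measure_support mu = {0..1}"
    and "L1_D M (D_mu M mu) X" and "L1_D M (D_mu M mu) W"
  shows "u_contrib M mu X W = u_mu M mu X \<longleftrightarrow> comonotone M X W"
proof -
  have "wvar M mu" unfolding wvar_def wvar_axioms_def using assms(1-4) by blast
  then interpret wvar M mu .
  have Dd: "\<And>Z. Z \<in> D_mu M mu \<Longrightarrow> is_density M Z" unfolding D_mu_def by blast
  obtain CX where CX: "0 \<le> CX" "\<forall>Z\<in>D_mu M mu. (\<integral>\<^sup>+x. ennreal (Z x * \<bar>X x\<bar>) \<partial>M) \<le> ennreal CX"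
    using L1D_bound[OF assms(6) Dd] by blast
  obtain CW where CW: "0 \<le> CW" "\<forall>Z\<in>D_mu M mu. (\<integral>\<^sup>+x. ennreal (Z x * \<bar>W x\<bar>) \<partial>M) \<le> ennreal CW"
    using L1D_bound[OF assms(7) Dd] by blast
  have Xm[measurable]: "X \<in> borel_measurable M" using assms(6) unfolding L1_D_def by blast
  have Wm[measurable]: "W \<in> borel_measurable M" using assms(7) unfolding L1_D_def by blast
  have dX: "integrable M (\<lambda>x. Z x * X x)" "expQ M Z X = ereal (\<integral>x. Z x * X x \<partial>M)"
    "- CX \<le> (\<integral>x. Z x * X x \<partial>M)" if "Z \<in> D_mu M mu" for Z
    using Dmu_int[OF Dd[OF that] _ CX(1) Xm] CX(2) that by auto
  have dW: "integrable M (\<lambda>x. Z x * W x)" "expQ M Z W = ereal (\<integral>x. Z x * W x \<partial>M)"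
    "- CW \<le> (\<integral>x. Z x * W x \<partial>M)" if "Z \<in> D_mu M mu" for Z
    using Dmu_int[OF Dd[OF that] _ CW(1) Wm] CW(2) that by auto
  have Xi: "integrable M X" using dX(1)[OF one_Dmu] by simp
  have Wi: "integrable M W" using dW(1)[OF one_Dmu] by simp
  show ?thesis
  proof
    assume H: "u_contrib M mu X W = u_mu M mu X"
    have "u_mu M mu X \<le> expQ M (\<lambda>_. 1) X" using one_Dmu Xm unfolding D_mu_def by blast
    then have upX: "u_mu M mu X \<le> ereal (\<integral>x. X x \<partial>M)" using dX(2)[OF one_Dmu] by simp
    have loX: "ereal (- CX) \<le> u_contrib M mu X W" unfolding u_contrib_def
    proof (rule INF_greatest)
      fix Q assume "Q \<in> extreme_mu M mu W"
      then have Q: "Q \<in> D_mu M mu" unfolding extreme_mu_def by blast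
      show "ereal (- CX) \<le> expQ M Q X" using dX(2,3)[OF Q] by simp
    qed
    have ne: "extreme_mu M mu W \<noteq> {}"
    proof
      assume "extreme_mu M mu W = {}"
      then have "u_contrib M mu X W = \<infinity>" unfolding u_contrib_def by (simp add: top_ereal_def)
      then show False using H upX by simp
    qed
    then obtain Q0 where Q0: "Q0 \<in> extreme_mu M mu W" by blast
    obtain rW where rW: "u_mu M mu W = ereal rW" using Q0 unfolding extreme_mu_def
      by (cases "u_mu M mu W") auto
    obtain rX where rX: "u_mu M mu X = ereal rX" using loX upX H by (cases "u_mu M mu X") auto
    have le: "u_mu M mu (\<lambda>\<omega>. X \<omega> + W \<omega>) \<le> ereal (rX + rW)"
    proof (rule ereal_le_epsilon2)
      fix e :: real assume e: "0 < e"
      have "u_contrib M mu X W < ereal (rX + e)" using H rX e by simp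
      then obtain Q where Q: "Q \<in> extreme_mu M mu W" "expQ M Q X < ereal (rX + e)"
        unfolding u_contrib_def by (auto simp: INF_less_iff)
      have QD: "Q \<in> D_mu M mu" and QW: "expQ M Q W = u_mu M mu W" using Q(1) unfolding extreme_mu_def by auto
      have iQ: "integrable M (\<lambda>x. Q x * (X x + W x))" using dX(1)[OF QD] dW(1)[OF QD] by (simp add: distrib_left)
      have "expQ M Q (\<lambda>\<omega>. X \<omega> + W \<omega>) = ereal (\<integral>x. Q x * (X x + W x) \<partial>M)"
        unfolding expQ_def by (rule ext_int_integrable[OF iQ])
      also have "\<dots> = ereal (\<integral>x. Q x * X x \<partial>M) + ereal (\<integral>x. Q x * W x \<partial>M)"
        using dX(1)[OF QD] dW(1)[OF QD] by (simp add: distrib_left)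
      also have "\<dots> = expQ M Q X + expQ M Q W" using dX(2)[OF QD] dW(2)[OF QD] by simp
      finally have eqQ: "expQ M Q (\<lambda>\<omega>. X \<omega> + W \<omega>) = expQ M Q X + ereal rW" using QW rW by simp
      have "u_mu M mu (\<lambda>\<omega>. X \<omega> + W \<omega>) \<le> expQ M Q (\<lambda>\<omega>. X \<omega> + W \<omega>)"
        using QD unfolding D_mu_def by auto
      also have "\<dots> \<le> ereal (rX + e) + ereal rW" unfolding eqQ using Q(2) by (intro add_right_mono) simp
      finally show "u_mu M mu (\<lambda>\<omega>. X \<omega> + W \<omega>) \<le> ereal (rX + rW) + ereal e" by (simp add: algebra_simps)
    qed
    show "comonotone M X W" by (rule forward[OF assms(5) Xi Wi rX rW le])
  next
    assume cm: "comonotone M X W"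
    show "u_contrib M mu X W = u_mu M mu X" by (rule backward[OF cm Xi Wi CX(2) CX(1) CW(2) CW(1)])
  qed
qed


end
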